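(* Let $m\ge 1$ and, for $i=1,\ldots,m$, let $\{X^{(i)}_j\}_{j\ge 0}$ be real random variables such that the families for different $i$ are independent of each other, and each family satisfies: $\{X^{(i)}_j\}_{j\ge0}$ are independent, $\mathrm{E}(X^{(i)}_j)=0$, $\mathrm{E}((X^{(i)}_j)^2)=1$ for all $j\ge0$, and $\sup_{j\ge0}\mathrm{E}(|X^{(i)}_j|^k)<\infty$ for every $k\ge3$. For each $n$ and $i$, let $RC^{(i)}_n$ be the $n\times n$ reverse circulant matrix whose $(r,s)$-th entry is $X^{(i)}_k/\sqrt n$, where $k\in\{1,\ldots,n\}$ satisfies $k\equiv r+s-1\pmod n$. Let $\{\eta_i\}_{1\le i\le m}$ be independent complex standard Gaussian random variables and define the $2\times 2$ random matrices $$a_i=\begin{pmatrix}0&\eta_i\\ \overline{\eta_i}&0\end{pmatrix},\qquad i=1,\ldots,m.$$ Then, as elements of the non-commutative probability space $(\mathcal M_n,\phi_n)$, $\{RC^{(i)}_n\}_{1\le i\le m}$ converges jointly to $\{a_i\}_{1\le i\le m}\subset(\mathcal M_2,\phi_2)$; that is, for every complex polynomial $Q$ in $m$ non-commuting variables, $$\phi_n\big(Q(RC^{(1)}_n,\ldots,RC^{(m)}_n)\big)\to \phi_2\big(Q(a_1,\ldots,a_m)\big)\quad\text{as } n\to\infty.$$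
   Context: $\mathcal M_n$ denotes the algebra of $n\times n$ random matrices whose entries have finite moments of all orders, and $\phi_n(A)=\frac1n\mathrm{E}[\mathrm{Tr}(A)]$; $(\mathcal M_n,\phi_n)$ is a non-commutative probability space (a unital complex algebra with a linear functional $\phi_n$ satisfying $\phi_n(I)=1$). A complex standard Gaussian variable $\eta$ satisfies $\mathrm{E}|\eta|^2=1$ (so $\mathrm{E}|\eta|^{2s}=s!$). *)

theory Defs
  imports "HOL-Probability.Probability"
begin

type_synonym cmat = "nat \<Rightarrow> nat \<Rightarrow> complex"

text \<open>n x n matrices, 0-based indices r, s < n; entries outside are irrelevant.\<close>

definition mat_mult :: "nat \<Rightarrow> cmat \<Rightarrow> cmat \<Rightarrow> cmat" where
  "mat_mult n A B = (\<lambda>r s. \<Sum>k<n. A r k * B k s)"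

definition mat_id :: cmat where
  "mat_id = (\<lambda>r s. if r = s then 1 else 0)"

definition mtrace :: "nat \<Rightarrow> cmat \<Rightarrow> complex" where
  "mtrace n B = (\<Sum>r<n. B r r)"

fun word_prod :: "nat \<Rightarrow> (nat \<Rightarrow> 'a \<Rightarrow> cmat) \<Rightarrow> nat list \<Rightarrow> 'a \<Rightarrow> cmat" where
  "word_prod n A [] \<omega> = mat_id"
| "word_prod n A (i # w) \<omega> = mat_mult n (A i \<omega>) (word_prod n A w \<omega>)"

text \<open>A complex polynomial in non-commuting variables: finite set W of words with
  coefficients c; evaluated at random matrices A 0, A 1, ...\<close>
definition ncpoly_eval :: "nat \<Rightarrow> nat list set \<Rightarrow> (nat list \<Rightarrow> complex)
    \<Rightarrow> (nat \<Rightarrow> 'a \<Rightarrow> cmat) \<Rightarrow> 'a \<Rightarrow> cmat" where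
  "ncpoly_eval n W c A \<omega> = (\<lambda>r s. \<Sum>w\<in>W. c w * word_prod n A w \<omega> r s)"

definition ncphi :: "'a measure \<Rightarrow> nat \<Rightarrow> ('a \<Rightarrow> cmat) \<Rightarrow> complex" where
  "ncphi M n A = (1 / of_nat n) * (\<integral>\<omega>. mtrace n (A \<omega>) \<partial>M)"

text \<open>Reverse circulant matrix (0-based): entry (r,s) is X_k / sqrt n with
  k in {1..n}, k = r+s+1 (mod n), i.e. the paper's k = r'+s'-1 mod n for 1-based r'=r+1,s'=s+1.\<close>
definition rev_circ :: "nat \<Rightarrow> (nat \<Rightarrow> 'a \<Rightarrow> real) \<Rightarrow> 'a \<Rightarrow> cmat" where
  "rev_circ n X \<omega> = (\<lambda>r s. complex_of_real (X ((r + s) mod n + 1) \<omega> / sqrt (real n)))"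

definition a_mat :: "complex \<Rightarrow> cmat" where
  "a_mat z = (\<lambda>r s. if r = 0 \<and> s = 1 then z else if r = 1 \<and> s = 0 then cnj z else 0)"

definition complex_std_gaussian :: "'b measure \<Rightarrow> ('b \<Rightarrow> complex) \<Rightarrow> bool" where
  "complex_std_gaussian N e \<longleftrightarrow>
     distributed N lborel (\<lambda>\<omega>. Re (e \<omega>)) (normal_density 0 (1 / sqrt 2)) \<and>
     distributed N lborel (\<lambda>\<omega>. Im (e \<omega>)) (normal_density 0 (1 / sqrt 2)) \<and>
     prob_space.indep_var N borel (\<lambda>\<omega>. Re (e \<omega>)) borel (\<lambda>\<omega>. Im (e \<omega>))"

end

theory Submission
  imports Defs "HOL-Computational_Algebra.Polynomial"
begin

definition mmom :: "nat \<Rightarrow> real" where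
  "mmom p = (if even p then fact p / (4 ^ (p div 2) * fact (p div 2)) else 0)"

lemma mmom_0[simp]: "mmom 0 = 1" by (simp add: mmom_def)
lemma mmom_1[simp]: "mmom 1 = 0" by (simp add: mmom_def)
lemma mmom_Suc0[simp]: "mmom (Suc 0) = 0" by (simp add: mmom_def)

lemma mmom_SS: "mmom (Suc (Suc j)) = (real (Suc j) / 2) * mmom j"
proof (cases "even j")
  case True
  then obtain t where t: "j = 2 * t" by blast
  have "Suc (Suc j) = 2 * Suc t" using t by simp
  then have "mmom (Suc (Suc j)) = fact (2 * Suc t) / (4 ^ Suc t * fact (Suc t))"
    by (simp add: mmom_def)
  also have "\<dots> = (real (Suc j) / 2) * (fact (2*t) / (4 ^ t * fact t))"
  proof -
    have f1: "(fact (2 * Suc t) :: real) = (2*t+2) * (2*t+1) * fact (2*t)"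
      by (simp add: fact_Suc algebra_simps)
    have f2: "(fact (Suc t) :: real) = (t+1) * fact t" by (simp add: fact_Suc algebra_simps)
    have p1: "(fact t :: real) > 0" by simp
    have p2: "(4::real) ^ t > 0" by simp
    have "(real (Suc j) / 2) * (fact (2*t) / (4 ^ t * fact t)) = 
          ((2*t+2) * (2*t+1) * fact (2*t)) / (4 ^ Suc t * ((t+1) * fact t))"
    proof -
      have "((2*t+2) * (2*t+1) * fact (2*t)) / (4 ^ Suc t * ((t+1) * fact t)) =
            (real (t+1) * ((2*(2*t+1)) * fact (2*t))) / (real (t+1) * (4 * 4^t * fact t))"
        by (simp add: algebra_simps)
      also have "\<dots> = ((2*(2*t+1)) * fact (2*t)) / (4 * 4^t * fact t)"
        by (rule nonzero_mult_divide_mult_cancel_left) simp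
      also have "\<dots> = (real (Suc j) / 2) * (fact (2*t) / (4 ^ t * fact t))"
        using t p1 p2 by (simp add: field_simps)
      finally show ?thesis by simp
    qed
    then show ?thesis unfolding f1 f2 by simp
  qed
  finally show ?thesis using t by (simp add: mmom_def)
next
  case False
  then show ?thesis by (simp add: mmom_def)
qed

lemma stein_sum:
  fixes f :: "nat \<Rightarrow> complex"
  assumes "\<And>j. j > D \<Longrightarrow> f j = 0"
  shows "(\<Sum>j\<le>Suc D. complex_of_real (mmom j) * (case j of 0 \<Rightarrow> 0 | Suc i \<Rightarrow> f i))
       = (1/2) * (\<Sum>j\<le>Suc D. complex_of_real (mmom j) * of_nat (Suc j) * f (Suc j))"
proof -
  have "(\<Sum>j\<le>Suc D. complex_of_real (mmom j) * (case j of 0 \<Rightarrow> 0 | Suc i \<Rightarrow> f i))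
      = (\<Sum>j\<le>D. complex_of_real (mmom (Suc j)) * f j)"
    by (subst sum.atMost_Suc_shift) simp
  also have "\<dots> = (\<Sum>j\<le>Suc D. complex_of_real (mmom (Suc j)) * f j)"
    using assms by simp
  also have "\<dots> = (\<Sum>j\<le>D. complex_of_real (mmom (Suc (Suc j))) * f (Suc j))"
    by (subst sum.atMost_Suc_shift) simp
  also have "\<dots> = (\<Sum>j\<le>D. (1/2) * (complex_of_real (mmom j) * of_nat (Suc j) * f (Suc j)))"
    by (intro sum.cong refl) (simp add: mmom_SS field_simps)
  also have "\<dots> = (1/2) * (\<Sum>j\<le>D. complex_of_real (mmom j) * of_nat (Suc j) * f (Suc j))"
    by (simp add: sum_distrib_left)
  also have "(\<Sum>j\<le>D. complex_of_real (mmom j) * of_nat (Suc j) * f (Suc j))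
      = (\<Sum>j\<le>Suc D. complex_of_real (mmom j) * of_nat (Suc j) * f (Suc j))"
    using assms by simp
  finally show ?thesis .
qed

definition L1 :: "complex poly \<Rightarrow> complex" where
  "L1 q = (\<Sum>j\<le>degree q. complex_of_real (mmom j) * coeff q j)"

lemma L1_ext: assumes "\<And>j. j > N \<Longrightarrow> coeff q j = 0"
  shows "L1 q = (\<Sum>j\<le>N. complex_of_real (mmom j) * coeff q j)"
proof -
  have dN: "degree q \<le> N" using assms by (intro degree_le) auto
  show ?thesis unfolding L1_def
    by (rule sum.mono_neutral_left) (use dN in \<open>auto simp: coeff_eq_0\<close>)
qed

lemma L1_add: "L1 (p + q) = L1 p + L1 q"
proof -
  let ?N = "max (degree p) (degree q)"
  have "L1 (p+q) = (\<Sum>j\<le>?N. complex_of_real (mmom j) * coeff (p+q) j)"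
    by (rule L1_ext) (simp add: coeff_eq_0)
  moreover have "L1 p = (\<Sum>j\<le>?N. complex_of_real (mmom j) * coeff p j)"
    by (rule L1_ext) (simp add: coeff_eq_0)
  moreover have "L1 q = (\<Sum>j\<le>?N. complex_of_real (mmom j) * coeff q j)"
    by (rule L1_ext) (simp add: coeff_eq_0)
  ultimately show ?thesis by (simp add: distrib_left sum.distrib)
qed

lemma L1_smult: "L1 (smult c q) = c * L1 q"
proof -
  have "L1 (smult c q) = (\<Sum>j\<le>degree q. complex_of_real (mmom j) * coeff (smult c q) j)"
    by (rule L1_ext) (simp add: coeff_eq_0)
  then show ?thesis by (simp add: L1_def sum_distrib_left ac_simps)
qed

lemma L1_stein: "L1 (pCons 0 q) = (1/2) * L1 (pderiv q)"
proof -
  let ?D = "degree q"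
  have "L1 (pCons 0 q) = (\<Sum>j\<le>Suc ?D. complex_of_real (mmom j) * coeff (pCons 0 q) j)"
    by (rule L1_ext) (simp add: coeff_pCons coeff_eq_0 split: nat.split)
  also have "\<dots> = (\<Sum>j\<le>Suc ?D. complex_of_real (mmom j) * (case j of 0 \<Rightarrow> 0 | Suc i \<Rightarrow> coeff q i))"
    by (simp add: coeff_pCons)
  also have "\<dots> = (1/2) * (\<Sum>j\<le>Suc ?D. complex_of_real (mmom j) * of_nat (Suc j) * coeff q (Suc j))"
    by (rule stein_sum) (simp add: coeff_eq_0)
  also have "(\<Sum>j\<le>Suc ?D. complex_of_real (mmom j) * of_nat (Suc j) * coeff q (Suc j)) = L1 (pderiv q)"
    by (rule sym, rule trans, rule L1_ext[where N="Suc ?D"]) 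
       (auto simp: coeff_pderiv coeff_eq_0 ac_simps)
  finally show ?thesis .
qed

lemma L1_one: "L1 1 = 1" by (simp add: L1_def)

definition LL :: "complex poly poly \<Rightarrow> complex" where
  "LL P = (\<Sum>p\<le>degree P. complex_of_real (mmom p) * L1 (coeff P p))"

lemma L1_0[simp]: "L1 0 = 0" by (simp add: L1_def)

lemma LL_ext: assumes "\<And>j. j > N \<Longrightarrow> coeff P j = 0"
  shows "LL P = (\<Sum>j\<le>N. complex_of_real (mmom j) * L1 (coeff P j))"
proof -
  have dN: "degree P \<le> N" using assms by (intro degree_le) auto
  show ?thesis unfolding LL_def
    by (rule sum.mono_neutral_left) (use dN in \<open>auto simp: coeff_eq_0\<close>)
qed

lemma LL_add: "LL (p + q) = LL p + LL q"
proof -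
  let ?N = "max (degree p) (degree q)"
  have "LL (p+q) = (\<Sum>j\<le>?N. complex_of_real (mmom j) * L1 (coeff (p+q) j))"
    by (rule LL_ext) (simp add: coeff_eq_0)
  moreover have "LL p = (\<Sum>j\<le>?N. complex_of_real (mmom j) * L1 (coeff p j))"
    by (rule LL_ext) (simp add: coeff_eq_0)
  moreover have "LL q = (\<Sum>j\<le>?N. complex_of_real (mmom j) * L1 (coeff q j))"
    by (rule LL_ext) (simp add: coeff_eq_0)
  ultimately show ?thesis by (simp add: L1_add distrib_left sum.distrib)
qed

lemma LL_smult: "LL (smult [:c:] q) = c * LL q"
proof -
  have "LL (smult [:c:] q) = (\<Sum>j\<le>degree q. complex_of_real (mmom j) * L1 (coeff (smult [:c:] q) j))"
    by (rule LL_ext) (simp add: coeff_eq_0)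
  then show ?thesis by (simp add: LL_def L1_smult sum_distrib_left ac_simps)
qed

lemma LL_stein_X: "LL (pCons 0 P) = (1/2) * LL (pderiv P)"
proof -
  let ?D = "degree P"
  have "LL (pCons 0 P) = (\<Sum>j\<le>Suc ?D. complex_of_real (mmom j) * L1 (coeff (pCons 0 P) j))"
    by (rule LL_ext) (simp add: coeff_pCons coeff_eq_0 split: nat.split)
  also have "\<dots> = (\<Sum>j\<le>Suc ?D. complex_of_real (mmom j) * (case j of 0 \<Rightarrow> 0 | Suc i \<Rightarrow> L1 (coeff P i)))"
    by (intro sum.cong refl) (simp add: coeff_pCons split: nat.split)
  also have "\<dots> = (1/2) * (\<Sum>j\<le>Suc ?D. complex_of_real (mmom j) * of_nat (Suc j) * L1 (coeff P (Suc j)))"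
    by (rule stein_sum) (simp add: coeff_eq_0)
  also have "(\<Sum>j\<le>Suc ?D. complex_of_real (mmom j) * of_nat (Suc j) * L1 (coeff P (Suc j))) = LL (pderiv P)"
  proof -
    have "LL (pderiv P) = (\<Sum>j\<le>Suc ?D. complex_of_real (mmom j) * L1 (coeff (pderiv P) j))"
      by (rule LL_ext) (auto simp: coeff_pderiv coeff_eq_0)
    also have "\<dots> = (\<Sum>j\<le>Suc ?D. complex_of_real (mmom j) * of_nat (Suc j) * L1 (coeff P (Suc j)))"
    proof (intro sum.cong refl)
      fix j
      have "coeff (pderiv P) j = smult (of_nat (Suc j)) (coeff P (Suc j))"
        by (simp add: coeff_pderiv of_nat_poly)
      then show "complex_of_real (mmom j) * L1 (coeff (pderiv P) j) = complex_of_real (mmom j) * of_nat (Suc j) * L1 (coeff P (Suc j))"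
        by (simp add: L1_smult)
    qed
    finally show ?thesis by simp
  qed
  finally show ?thesis .
qed

definition Ymul :: "complex poly poly \<Rightarrow> complex poly poly" where
  "Ymul P = map_poly (pCons 0) P"
definition dY :: "complex poly poly \<Rightarrow> complex poly poly" where
  "dY P = map_poly pderiv P"

lemma coeff_Ymul: "coeff (Ymul P) j = pCons 0 (coeff P j)"
  by (simp add: Ymul_def coeff_map_poly)
lemma coeff_dY: "coeff (dY P) j = pderiv (coeff P j)"
  by (simp add: dY_def coeff_map_poly)

lemma LL_stein_Y: "LL (Ymul P) = (1/2) * LL (dY P)"
proof -
  have "LL (Ymul P) = (\<Sum>j\<le>degree P. complex_of_real (mmom j) * L1 (coeff (Ymul P) j))"
    by (rule LL_ext) (simp add: coeff_Ymul coeff_eq_0)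
  moreover have "LL (dY P) = (\<Sum>j\<le>degree P. complex_of_real (mmom j) * L1 (coeff (dY P) j))"
    by (rule LL_ext) (simp add: coeff_dY coeff_eq_0)
  ultimately show ?thesis
    by (simp add: coeff_Ymul coeff_dY L1_stein sum_distrib_left ac_simps)
qed

lemma pderiv_sum': "pderiv (sum f A) = (\<Sum>x\<in>A. pderiv (f x))"
  using higher_pderiv_sum[of 1 f A] by simp

lemma dY_add: "dY (P + Q) = dY P + dY Q"
  by (rule poly_eqI) (simp add: coeff_dY pderiv_add)

lemma dY_mult: "dY (P * Q) = dY P * Q + P * dY Q"
proof (rule poly_eqI)
  fix n
  have "coeff (dY (P * Q)) n = (\<Sum>i\<le>n. pderiv (coeff P i * coeff Q (n - i)))"
    by (simp add: coeff_dY coeff_mult pderiv_sum')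
  also have "\<dots> = (\<Sum>i\<le>n. pderiv (coeff P i) * coeff Q (n - i)) + (\<Sum>i\<le>n. coeff P i * pderiv (coeff Q (n - i)))"
    by (simp add: pderiv_mult sum.distrib algebra_simps)
  also have "\<dots> = coeff (dY P * Q + P * dY Q) n"
    by (simp add: coeff_mult coeff_dY)
  finally show "coeff (dY (P * Q)) n = coeff (dY P * Q + P * dY Q) n" .
qed

lemma dY_const: "dY [:c:] = [:pderiv c:]"
  by (rule poly_eqI) (simp add: coeff_dY coeff_pCons split: nat.split)

lemma dY_one: "dY 1 = 0"
  by (simp add: one_pCons dY_const)

lemma smult_const_plus: "(H::complex poly poly) + smult [:c:] H = smult [:c+1:] H"
proof -
  have "[:c+1:] = [:c:] + 1" by (simp add: one_pCons)
  then show ?thesis by (simp add: smult_add_left)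
qed

lemma dY_power: "dY (P ^ a) = smult (of_nat a) (P ^ (a - 1) * dY P)"
proof (induction a)
  case 0
  then show ?case by (simp add: dY_one)
next
  case (Suc a)
  show ?case
  proof (cases a)
    case 0
    then show ?thesis by simp
  next
    case (Suc a')
    have "dY (P ^ Suc a) = dY P * P ^ a + P * dY (P ^ a)" by (simp add: dY_mult)
    also have "\<dots> = smult (of_nat (Suc a)) (P ^ a * dY P)"
      using Suc.IH Suc by (simp add: algebra_simps of_nat_poly smult_const_plus)
    finally show ?thesis by simp
  qed
qed

definition Zp :: "complex poly poly" where "Zp = [:[:0, \<i>:], 1:]"
definition Zbp :: "complex poly poly" where "Zbp = [:[:0, -\<i>:], 1:]"

lemma pderiv_Zp: "pderiv Zp = 1" by (simp add: Zp_def pderiv_pCons)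
lemma pderiv_Zbp: "pderiv Zbp = 1" by (simp add: Zbp_def pderiv_pCons)
lemma dY_Zp: "dY Zp = [:[:\<i>:]:]"
  by (rule poly_eqI) (simp add: Zp_def coeff_dY coeff_pCons pderiv_pCons split: nat.split)
lemma dY_Zbp: "dY Zbp = [:[:-\<i>:]:]"
  by (rule poly_eqI) (simp add: Zbp_def coeff_dY coeff_pCons pderiv_pCons split: nat.split)

lemma smult_X_Ymul: "smult [:0, c:] G = smult [:c:] (Ymul G)"
  by (rule poly_eqI) (simp add: coeff_Ymul)

lemma Zp_mult: "Zp * G = pCons 0 G + smult [:\<i>:] (Ymul G)"
  by (simp add: Zp_def smult_X_Ymul[symmetric])
lemma Zbp_mult: "Zbp * G = pCons 0 G + smult [:-\<i>:] (Ymul G)"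
  by (simp add: Zbp_def smult_X_Ymul[symmetric])

lemma LL_Zp: "LL (Zp * G) = (1/2) * LL (pderiv G) + (\<i>/2) * LL (dY G)"
  by (simp add: Zp_mult LL_add LL_smult LL_stein_X LL_stein_Y)
lemma LL_Zbp: "LL (Zbp * G) = (1/2) * LL (pderiv G) - (\<i>/2) * LL (dY G)"
  by (simp add: Zbp_mult LL_add LL_smult LL_stein_X LL_stein_Y)

definition FF :: "nat \<Rightarrow> nat \<Rightarrow> complex" where
  "FF a b = LL (Zp ^ a * Zbp ^ b)"

lemma pderiv_G: "pderiv (Zp ^ a * Zbp ^ b) =
   smult [:of_nat b:] (Zp ^ a * Zbp ^ (b - 1)) + smult [:of_nat a:] (Zp ^ (a - 1) * Zbp ^ b)"
  by (simp add: pderiv_mult pderiv_power pderiv_Zp pderiv_Zbp algebra_simps of_nat_poly)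

lemma dY_G: "dY (Zp ^ a * Zbp ^ b) =
   smult [:\<i> * of_nat a:] (Zp ^ (a - 1) * Zbp ^ b) + smult [:- \<i> * of_nat b:] (Zp ^ a * Zbp ^ (b - 1))"
  by (simp add: dY_mult dY_power dY_Zp dY_Zbp algebra_simps of_nat_poly)

lemma FF_rec_b: "FF a (Suc b) = of_nat a * FF (a - 1) b"
proof -
  have "FF a (Suc b) = LL (Zbp * (Zp ^ a * Zbp ^ b))"
    by (simp add: FF_def algebra_simps)
  also have "\<dots> = of_nat a * FF (a - 1) b"
    unfolding LL_Zbp pderiv_G dY_G by (simp add: LL_add LL_smult FF_def field_simps)
  finally show ?thesis .
qed

lemma FF_rec_a: "FF (Suc a) b = of_nat b * FF a (b - 1)"
proof -
  have "FF (Suc a) b = LL (Zp * (Zp ^ a * Zbp ^ b))"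
    by (simp add: FF_def algebra_simps)
  also have "\<dots> = of_nat b * FF a (b - 1)"
    unfolding LL_Zp pderiv_G dY_G by (simp add: LL_add LL_smult FF_def field_simps)
  finally show ?thesis .
qed

lemma FF_00: "FF 0 0 = 1"
  by (simp add: FF_def LL_def L1_def)

lemma FF_closed: "FF a b = (if a = b then fact a else 0)"
proof (induction b arbitrary: a)
  case 0
  show ?case
  proof (cases a)
    case 0 then show ?thesis by (simp add: FF_00)
  next
    case (Suc a') then show ?thesis by (simp add: FF_rec_a)
  qed
next
  case (Suc b)
  show ?case
  proof (cases a)
    case 0 then show ?thesis by (simp add: FF_rec_b)
  next
    case (Suc a') then show ?thesis using Suc.IH[of a'] by (simp add: FF_rec_b)
  qed
qed

definition ev :: "complex poly poly \<Rightarrow> complex \<Rightarrow> complex \<Rightarrow> complex" where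
  "ev P x y = poly (poly P [:x:]) y"

lemma ev_mult: "ev (P * Q) x y = ev P x y * ev Q x y"
  by (simp add: ev_def)
lemma ev_power: "ev (P ^ a) x y = ev P x y ^ a"
  by (simp add: ev_def poly_power)
lemma ev_Zp: "ev Zp x y = x + \<i> * y"
  by (simp add: ev_def Zp_def)
lemma ev_Zbp: "ev Zbp x y = x - \<i> * y"
  by (simp add: ev_def Zbp_def)

lemma ev_expand: "ev P x y = (\<Sum>p\<le>degree P. \<Sum>q\<le>degree (coeff P p). coeff (coeff P p) q * (x ^ p * y ^ q))"
proof -
  have "poly P [:x:] = (\<Sum>p\<le>degree P. coeff P p * [:x:] ^ p)" by (rule poly_altdef)
  then have "ev P x y = (\<Sum>p\<le>degree P. poly (coeff P p) y * x ^ p)"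
    by (simp add: ev_def poly_sum poly_power)
  also have "\<dots> = (\<Sum>p\<le>degree P. \<Sum>q\<le>degree (coeff P p). coeff (coeff P p) q * (x ^ p * y ^ q))"
    by (simp add: poly_altdef sum_distrib_left ac_simps)
  finally show ?thesis .
qed

lemma std_gauss_facts:
  assumes N: "prob_space N" and g: "complex_std_gaussian N e"
  shows "integrable N (\<lambda>\<omega>. complex_of_real (Re (e \<omega>) ^ p * Im (e \<omega>) ^ q))"
    and "(\<integral>\<omega>. complex_of_real (Re (e \<omega>) ^ p * Im (e \<omega>) ^ q) \<partial>N) = complex_of_real (mmom p * mmom q)"
proof -
  interpret prob_space N by (rule N)
  have dX: "distributed N lborel (\<lambda>\<omega>. Re (e \<omega>)) (normal_density 0 (1 / sqrt 2))"
   and dY: "distributed N lborel (\<lambda>\<omega>. Im (e \<omega>)) (normal_density 0 (1 / sqrt 2))"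
   and ind: "indep_var borel (\<lambda>\<omega>. Re (e \<omega>)) borel (\<lambda>\<omega>. Im (e \<omega>))"
    using g by (auto simp: complex_std_gaussian_def)
  have mom: "integrable N (\<lambda>\<omega>. Z \<omega> ^ k) \<and> (\<integral>\<omega>. Z \<omega> ^ k \<partial>N) = mmom k"
    if d: "distributed N lborel Z (normal_density 0 (1 / sqrt 2))" for Z k
  proof
    have i1: "integrable lborel (\<lambda>x. normal_density 0 (1 / sqrt 2) x * x ^ k)"
      using integrable_normal_moment[of "1 / sqrt 2" 0 k] by simp
    show "integrable N (\<lambda>\<omega>. Z \<omega> ^ k)"
      using distributed_integrable[OF d, of "\<lambda>x. x ^ k"] i1 by simp
    have "(\<integral>\<omega>. Z \<omega> ^ k \<partial>N) = (\<integral>x. normal_density 0 (1 / sqrt 2) x * x ^ k \<partial>lborel)"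
      using distributed_integral[OF d, of "\<lambda>x. x ^ k"] by simp
    also have "\<dots> = mmom k"
    proof (cases "even k")
      case True
      then obtain t where t: "k = 2 * t" by blast
      have "(\<integral>x. normal_density 0 (1 / sqrt 2) x * x ^ k \<partial>lborel) = fact (2 * t) / ((2 / (1 / sqrt 2)\<^sup>2) ^ t * fact t)"
        using integral_normal_moment_even[of "1 / sqrt 2" 0 t] t by simp
      also have "\<dots> = mmom k" using t by (simp add: mmom_def power2_eq_square)
      finally show ?thesis .
    next
      case False
      then obtain t where t: "k = 2 * t + 1" using oddE by blast
      show ?thesis using integral_normal_moment_odd[of "1 / sqrt 2" 0 t] t False by (simp add: mmom_def)
    qed
    finally show "(\<integral>\<omega>. Z \<omega> ^ k \<partial>N) = mmom k" .
  qed
  have ind2: "indep_var borel (\<lambda>\<omega>. Re (e \<omega>) ^ p) borel (\<lambda>\<omega>. Im (e \<omega>) ^ q)"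
    using indep_var_compose[OF ind, of "\<lambda>x. x ^ p" borel "\<lambda>x. x ^ q" borel] by (simp add: comp_def)
  have ir: "integrable N (\<lambda>\<omega>. Re (e \<omega>) ^ p * Im (e \<omega>) ^ q)"
    using indep_var_integrable[OF ind2] mom[OF dX] mom[OF dY] by blast
  then show "integrable N (\<lambda>\<omega>. complex_of_real (Re (e \<omega>) ^ p * Im (e \<omega>) ^ q))"
    by (rule integrable_of_real)
  have "(\<integral>\<omega>. Re (e \<omega>) ^ p * Im (e \<omega>) ^ q \<partial>N) = mmom p * mmom q"
    using indep_var_lebesgue_integral[OF ind2] mom[OF dX] mom[OF dY] by simp
  then show "(\<integral>\<omega>. complex_of_real (Re (e \<omega>) ^ p * Im (e \<omega>) ^ q) \<partial>N) = complex_of_real (mmom p * mmom q)"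
    by (simp only: integral_complex_of_real)
qed

lemma std_gauss_ev:
  assumes N: "prob_space N" and g: "complex_std_gaussian N e"
  shows "integrable N (\<lambda>\<omega>. ev P (complex_of_real (Re (e \<omega>))) (complex_of_real (Im (e \<omega>))))"
    and "(\<integral>\<omega>. ev P (complex_of_real (Re (e \<omega>))) (complex_of_real (Im (e \<omega>))) \<partial>N) = LL P"
proof -
  have eq: "ev P (complex_of_real (Re (e \<omega>))) (complex_of_real (Im (e \<omega>))) =
     (\<Sum>p\<le>degree P. \<Sum>q\<le>degree (coeff P p). coeff (coeff P p) q * complex_of_real (Re (e \<omega>) ^ p * Im (e \<omega>) ^ q))" for \<omega>
    by (simp add: ev_expand)
  show "integrable N (\<lambda>\<omega>. ev P (complex_of_real (Re (e \<omega>))) (complex_of_real (Im (e \<omega>))))"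
    unfolding eq using std_gauss_facts(1)[OF N g] by auto
  have "(\<integral>\<omega>. ev P (complex_of_real (Re (e \<omega>))) (complex_of_real (Im (e \<omega>))) \<partial>N)
     = (\<Sum>p\<le>degree P. \<Sum>q\<le>degree (coeff P p). coeff (coeff P p) q * complex_of_real (mmom p * mmom q))"
    unfolding eq using std_gauss_facts[OF N g]
    by (simp add: integral_sum integrable_sum)
  also have "\<dots> = LL P"
    by (simp add: LL_def L1_def sum_distrib_left ac_simps)
  finally show "(\<integral>\<omega>. ev P (complex_of_real (Re (e \<omega>))) (complex_of_real (Im (e \<omega>))) \<partial>N) = LL P" .
qed

lemma cnj_decomp: "cnj z = complex_of_real (Re z) - \<i> * complex_of_real (Im z)"
  by (simp add: complex_eq_iff)
lemma z_decomp: "z = complex_of_real (Re z) + \<i> * complex_of_real (Im z)"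
  by (simp add: complex_eq_iff)

lemma std_gauss_moment:
  assumes N: "prob_space N" and g: "complex_std_gaussian N e"
  shows "integrable N (\<lambda>\<omega>. e \<omega> ^ a * cnj (e \<omega>) ^ b)"
    and "(\<integral>\<omega>. e \<omega> ^ a * cnj (e \<omega>) ^ b \<partial>N) = (if a = b then fact a else 0)"
proof -
  have eq: "e \<omega> ^ a * cnj (e \<omega>) ^ b = ev (Zp ^ a * Zbp ^ b) (complex_of_real (Re (e \<omega>))) (complex_of_real (Im (e \<omega>)))" for \<omega>
    by (simp only: ev_mult ev_power ev_Zp ev_Zbp cnj_decomp[symmetric] z_decomp[symmetric])
  show "integrable N (\<lambda>\<omega>. e \<omega> ^ a * cnj (e \<omega>) ^ b)"
    unfolding eq by (rule std_gauss_ev(1)[OF N g])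
  show "(\<integral>\<omega>. e \<omega> ^ a * cnj (e \<omega>) ^ b \<partial>N) = (if a = b then fact a else 0)"
    unfolding eq std_gauss_ev(2)[OF N g] FF_def[symmetric] FF_closed by simp
qed

fun Qf :: "(nat \<Rightarrow> 'b \<Rightarrow> complex) \<Rightarrow> bool \<Rightarrow> nat list \<Rightarrow> 'b \<Rightarrow> complex" where
  "Qf \<eta> b [] \<omega> = 1"
| "Qf \<eta> b (x # w) \<omega> = (if b then \<eta> x \<omega> else cnj (\<eta> x \<omega>)) * Qf \<eta> (\<not> b) w \<omega>"

fun cnt :: "bool \<Rightarrow> nat list \<Rightarrow> nat \<Rightarrow> nat" where
  "cnt b [] i = 0"
| "cnt b (x # w) i = (if b \<and> x = i then 1 else 0) + cnt (\<not> b) w i"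

lemma Qf_cnj: "Qf \<eta> (\<not> b) w \<omega> = cnj (Qf \<eta> b w \<omega>)"
  by (induction w arbitrary: b) auto

lemma wp_amat:
  assumes "r < 2" "s < 2"
  shows "word_prod 2 (\<lambda>i \<omega>. a_mat (\<eta> i \<omega>)) w \<omega> r s =
    (if r = 0 then (if s = length w mod 2 then Qf \<eta> True w \<omega> else 0)
     else (if s = 1 - length w mod 2 then Qf \<eta> False w \<omega> else 0))"
  using assms(1)
proof (induction w arbitrary: r)
  case Nil
  then show ?case using assms(2) by (auto simp: mat_id_def)
next
  case (Cons x w)
  have sum2: "(\<Sum>t<2. f t) = f 0 + f (1::nat)" for f :: "nat \<Rightarrow> complex"
    by (simp add: numeral_2_eq_2)
  let ?A = "\<lambda>i \<omega>. a_mat (\<eta> i \<omega>)"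
  have step: "word_prod 2 ?A (x#w) \<omega> r s = a_mat (\<eta> x \<omega>) r 0 * word_prod 2 ?A w \<omega> 0 s + a_mat (\<eta> x \<omega>) r 1 * word_prod 2 ?A w \<omega> 1 s"
    by (simp add: mat_mult_def sum2)
  have IH0: "word_prod 2 ?A w \<omega> 0 s = (if s = length w mod 2 then Qf \<eta> True w \<omega> else 0)"
    using Cons.IH[of 0] by simp
  have IH1: "word_prod 2 ?A w \<omega> 1 s = (if s = 1 - length w mod 2 then Qf \<eta> False w \<omega> else 0)"
    using Cons.IH[of 1] by simp
  have r: "r = 0 \<or> r = 1" using Cons.prems by auto
  have s: "s = 0 \<or> s = 1" using assms(2) by auto
  show ?case
    using r s unfolding step IH0 IH1
    by (cases "even (length w)") (auto simp: a_mat_def odd_iff_mod_2_eq_one even_iff_mod_2_eq_zero mod_Suc)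
qed

lemma trace_amat:
  "mtrace 2 (word_prod 2 (\<lambda>i \<omega>. a_mat (\<eta> i \<omega>)) w \<omega>) =
     (if even (length w) then Qf \<eta> True w \<omega> + cnj (Qf \<eta> True w \<omega>) else 0)"
proof -
  have sum2: "(\<Sum>t<2. f t) = f 0 + f (1::nat)" for f :: "nat \<Rightarrow> complex"
    by (simp add: numeral_2_eq_2)
  show ?thesis
    using Qf_cnj[of \<eta> True w \<omega>]
    by (auto simp: mtrace_def sum2 wp_amat odd_iff_mod_2_eq_one even_iff_mod_2_eq_zero)
qed

lemma Qf_prod:
  assumes "set w \<subseteq> {..<m}"
  shows "Qf \<eta> b w \<omega> = (\<Prod>i<m. \<eta> i \<omega> ^ cnt b w i * cnj (\<eta> i \<omega>) ^ cnt (\<not> b) w i)"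
  using assms
proof (induction w arbitrary: b)
  case Nil
  then show ?case by simp
next
  case (Cons x w)
  have xm: "x < m" using Cons.prems by auto
  have IH: "Qf \<eta> (\<not> b) w \<omega> = (\<Prod>i<m. \<eta> i \<omega> ^ cnt (\<not> b) w i * cnj (\<eta> i \<omega>) ^ cnt b w i)"
    using Cons by auto
  have "(\<Prod>i<m. \<eta> i \<omega> ^ cnt b (x # w) i * cnj (\<eta> i \<omega>) ^ cnt (\<not> b) (x # w) i)
     = (\<Prod>i<m. (if i = x then (if b then \<eta> x \<omega> else cnj (\<eta> x \<omega>)) else 1) *
            (\<eta> i \<omega> ^ cnt (\<not> b) w i * cnj (\<eta> i \<omega>) ^ cnt b w i))"
    by (intro prod.cong refl) auto
  also have "\<dots> = (if b then \<eta> x \<omega> else cnj (\<eta> x \<omega>)) * (\<Prod>i<m. \<eta> i \<omega> ^ cnt (\<not> b) w i * cnj (\<eta> i \<omega>) ^ cnt b w i)"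
    using xm by (simp add: prod.distrib prod.delta)
  finally show ?case using IH by simp
qed

lemma gauss_side:
  assumes N: "prob_space N"
    and gauss: "\<And>i. i < m \<Longrightarrow> complex_std_gaussian N (\<eta> i)"
    and gindep: "prob_space.indep_vars N (\<lambda>_. borel) \<eta> {..<m}"
    and w: "set w \<subseteq> {..<m}"
  shows "integrable N (\<lambda>\<omega>. Qf \<eta> True w \<omega>)"
    and "(\<integral>\<omega>. Qf \<eta> True w \<omega> \<partial>N) =
      complex_of_real (\<Prod>i<m. if cnt True w i = cnt False w i then fact (cnt True w i) else 0)"
proof -
  interpret prob_space N by (rule N)
  let ?Y = "\<lambda>i \<omega>. \<eta> i \<omega> ^ cnt True w i * cnj (\<eta> i \<omega>) ^ cnt False w i"
  have ind: "indep_vars (\<lambda>_. borel) ?Y {..<m}"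
    by (rule indep_vars_compose2[OF gindep, of "\<lambda>i z. z ^ cnt True w i * cnj z ^ cnt False w i" "\<lambda>_. borel", simplified])
       (intro borel_measurable_continuous_onI continuous_intros)
  have int: "integrable N (?Y i)" if "i \<in> {..<m}" for i
    using std_gauss_moment(1)[OF N gauss] that by auto
  have eq: "Qf \<eta> True w \<omega> = (\<Prod>i<m. ?Y i \<omega>)" for \<omega>
    using Qf_prod[OF w, of \<eta> True \<omega>] by simp
  show "integrable N (\<lambda>\<omega>. Qf \<eta> True w \<omega>)"
    unfolding eq using indep_vars_integrable[OF _ ind int] by simp
  have "(\<integral>\<omega>. Qf \<eta> True w \<omega> \<partial>N) = (\<Prod>i<m. \<integral>\<omega>. ?Y i \<omega> \<partial>N)"
    unfolding eq using indep_vars_lebesgue_integral[OF _ ind int] by simp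
  also have "\<dots> = (\<Prod>i<m. complex_of_real (if cnt True w i = cnt False w i then fact (cnt True w i) else 0))"
    by (intro prod.cong refl) (simp add: std_gauss_moment(2)[OF N gauss])
  finally show "(\<integral>\<omega>. Qf \<eta> True w \<omega> \<partial>N) =
      complex_of_real (\<Prod>i<m. if cnt True w i = cnt False w i then fact (cnt True w i) else 0)"
    by simp
qed


definition Fnat :: "nat \<Rightarrow> nat \<Rightarrow> nat" where
  "Fnat p q = (if p = q then fact q else 0)"

definition bijS :: "nat set \<Rightarrow> nat set \<Rightarrow> (nat \<Rightarrow> nat) \<Rightarrow> (nat \<Rightarrow> nat) set" where
  "bijS A B lf = {\<sigma> \<in> A \<rightarrow>\<^sub>E B. bij_betw \<sigma> A B \<and> (\<forall>a\<in>A. lf (\<sigma> a) = lf a)}"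

lemma bijS_finite: "finite A \<Longrightarrow> finite B \<Longrightarrow> finite (bijS A B lf)"
  unfolding bijS_def by (rule finite_subset[of _ "A \<rightarrow>\<^sub>E B"]) (auto intro!: finite_PiE)

lemma bijS_insert:
  assumes "a \<notin> A"
  shows "bijS (insert a A) B lf = (\<lambda>(b, \<tau>). \<tau>(a := b)) ` (SIGMA b:{b\<in>B. lf b = lf a}. bijS A (B - {b}) lf)"
proof (intro equalityI subsetI)
  fix \<sigma> assume s: "\<sigma> \<in> bijS (insert a A) B lf"
  then have pi: "\<sigma> \<in> insert a A \<rightarrow>\<^sub>E B" and bj: "bij_betw \<sigma> (insert a A) B"
    and lab: "\<forall>x\<in>insert a A. lf (\<sigma> x) = lf x" by (auto simp: bijS_def)
  define b where "b = \<sigma> a"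
  define \<tau> where "\<tau> = \<sigma>(a := undefined)"
  have inj: "inj_on \<sigma> (insert a A)" and im: "\<sigma> ` insert a A = B" using bj by (auto simp: bij_betw_def)
  have bB: "b \<in> B" using pi by (auto simp: b_def)
  have "\<tau> \<in> bijS A (B - {b}) lf"
  proof -
    have "\<tau> \<in> A \<rightarrow>\<^sub>E B - {b}"
    proof (unfold PiE_iff, intro conjI ballI)
      fix x assume x: "x \<in> A"
      then have xa: "x \<noteq> a" using assms by auto
      have "\<sigma> x \<in> B" using pi x by auto
      moreover have "\<sigma> x \<noteq> \<sigma> a" using inj x xa by (auto simp: inj_on_def)
      ultimately show "\<tau> x \<in> B - {b}" using xa by (simp add: \<tau>_def b_def)
    next
      show "\<tau> \<in> extensional A"
        unfolding extensional_def
      proof (intro CollectI allI impI)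
        fix x assume "x \<notin> A"
        then show "\<tau> x = undefined" using pi by (cases "x = a") (auto simp: \<tau>_def PiE_iff extensional_def)
      qed
    qed
    moreover have "bij_betw \<tau> A (B - {b})"
    proof -
      have "inj_on \<tau> A"
      proof (rule inj_onI)
        fix x y assume "x \<in> A" "y \<in> A" "\<tau> x = \<tau> y"
        then show "x = y" using inj assms unfolding \<tau>_def inj_on_def
          by (metis fun_upd_other insertCI)
      qed
      moreover have "\<tau> ` A = B - {b}"
      proof -
        have "\<tau> ` A = \<sigma> ` A" using assms unfolding \<tau>_def by (intro image_cong refl) auto
        also have "\<dots> = \<sigma> ` insert a A - {\<sigma> a}"
          using inj assms by (simp add: inj_on_image_set_diff[symmetric])
        finally show ?thesis using im by (auto simp: b_def)
      qed
      ultimately show ?thesis by (simp add: bij_betw_def)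
    qed
    moreover have "\<forall>x\<in>A. lf (\<tau> x) = lf x" using lab assms by (auto simp: \<tau>_def)
    ultimately show ?thesis by (simp add: bijS_def)
  qed
  moreover have "lf b = lf a" using lab by (simp add: b_def)
  moreover have "\<sigma> = \<tau>(a := b)" by (simp add: \<tau>_def b_def)
  ultimately show "\<sigma> \<in> (\<lambda>(b, \<tau>). \<tau>(a := b)) ` (SIGMA b:{b\<in>B. lf b = lf a}. bijS A (B - {b}) lf)"
    using bB by (intro image_eqI[of _ _ "(b, \<tau>)"]) auto
next
  fix \<sigma> assume "\<sigma> \<in> (\<lambda>(b, \<tau>). \<tau>(a := b)) ` (SIGMA b:{b\<in>B. lf b = lf a}. bijS A (B - {b}) lf)"
  then obtain b \<tau> where bB: "b \<in> B" and lb: "lf b = lf a" and t: "\<tau> \<in> bijS A (B - {b}) lf"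
    and sig: "\<sigma> = \<tau>(a := b)" by auto
  from t have pi: "\<tau> \<in> A \<rightarrow>\<^sub>E B - {b}" and bj: "bij_betw \<tau> A (B - {b})"
    and lab: "\<forall>x\<in>A. lf (\<tau> x) = lf x" by (auto simp: bijS_def)
  have "\<sigma> \<in> insert a A \<rightarrow>\<^sub>E B"
  proof (unfold PiE_iff, intro conjI ballI)
    fix x assume "x \<in> insert a A"
    then show "\<sigma> x \<in> B" using pi bB by (cases "x = a") (auto simp: sig)
  next
    show "\<sigma> \<in> extensional (insert a A)"
      using pi by (auto simp: sig PiE_iff extensional_def)
  qed
  moreover have "bij_betw \<sigma> (insert a A) B"
  proof -
    have "inj_on \<sigma> (insert a A)"
    proof -
      have "inj_on \<tau> A" using bj by (simp add: bij_betw_def)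
      moreover have "\<tau> x \<noteq> b" if "x \<in> A" for x using pi that by auto
      ultimately show ?thesis using assms unfolding sig inj_on_def
        by (metis fun_upd_other fun_upd_same insert_iff)
    qed
    moreover have "\<sigma> ` insert a A = B"
    proof -
      have "\<sigma> ` insert a A = insert b (\<tau> ` A)" using assms by (auto simp: sig)
      also have "\<dots> = B" using bj bB by (auto simp: bij_betw_def)
      finally show ?thesis .
    qed
    ultimately show ?thesis by (simp add: bij_betw_def)
  qed
  moreover have "\<forall>x\<in>insert a A. lf (\<sigma> x) = lf x" using lab lb assms by (auto simp: sig)
  ultimately show "\<sigma> \<in> bijS (insert a A) B lf" by (simp add: bijS_def)
qed

lemma bijS_insert_inj:
  assumes "a \<notin> A"
  shows "inj_on (\<lambda>(b, \<tau>). \<tau>(a := b)) (SIGMA b:{b\<in>B. lf b = lf a}. bijS A (B - {b}) lf)"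
proof (rule inj_onI, clarify)
  fix b \<tau> b' \<tau>'
  assume t: "\<tau> \<in> bijS A (B - {b}) lf" and t': "\<tau>' \<in> bijS A (B - {b'}) lf"
    and eq: "\<tau>(a := b) = \<tau>'(a := b')"
  have "b = b'" using fun_cong[OF eq, of a] by simp
  moreover have "\<tau> a = undefined" "\<tau>' a = undefined"
    using t t' assms by (auto simp: bijS_def PiE_def extensional_def)
  then have "\<tau> = \<tau>'" using eq by (metis fun_upd_triv fun_upd_upd)
  ultimately show "b = b' \<and> \<tau> = \<tau>'" by simp
qed

lemma card_label_diff:
  assumes "finite B" "b \<in> B" "lf b = x"
  shows "card {c \<in> B - {b}. lf c = i} = card {c \<in> B. lf c = i} - (if i = x then 1 else 0)"
proof -
  have "{c \<in> B - {b}. lf c = i} = {c \<in> B. lf c = i} - (if i = x then {b} else {})"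
    using assms by auto
  then show ?thesis using assms by (auto simp: card_Diff_singleton)
qed

lemma card_label_insert:
  assumes "finite A" "a \<notin> A"
  shows "card {c \<in> insert a A. lf c = i} = card {c \<in> A. lf c = i} + (if i = lf a then 1 else 0)"
proof -
  have "{c \<in> insert a A. lf c = i} = (if i = lf a then insert a {c \<in> A. lf c = i} else {c \<in> A. lf c = i})"
    by auto
  then show ?thesis using assms by auto
qed

lemma bij_count:
  assumes "finite A" "finite B" "lf ` (A \<union> B) \<subseteq> {..<m}"
  shows "card (bijS A B lf) = (\<Prod>i<m. Fnat (card {b\<in>B. lf b = i}) (card {a\<in>A. lf a = i}))"
  using assms
proof (induction A arbitrary: B rule: finite_induct)
  case empty
  show ?case
  proof (cases "B = {}")
    case True
    have "bijS {} B lf = {\<lambda>_. undefined}" using True by (auto simp: bijS_def bij_betw_def)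
    then show ?thesis using True by (simp add: Fnat_def)
  next
    case False
    then obtain b where bB: "b \<in> B" by auto
    have "bijS {} B lf = {}" using False by (auto simp: bijS_def bij_betw_def)
    moreover have "card {c\<in>B. lf c = lf b} \<noteq> 0" using bB empty.prems by auto
    moreover have "lf b < m" using bB empty.prems by auto
    ultimately show ?thesis
      by (auto simp: Fnat_def intro!: prod_zero bexI[of _ "lf b"])
  qed
next
  case (insert a A)
  let ?x = "lf a"
  have xm: "?x < m" using insert.prems by auto
  let ?Bx = "{b\<in>B. lf b = ?x}"
  have fin: "finite ?Bx" using insert.prems by auto
  have "card (bijS (insert a A) B lf) = card (SIGMA b:?Bx. bijS A (B - {b}) lf)"
    unfolding bijS_insert[OF insert.hyps(2)]
    by (rule card_image[OF bijS_insert_inj[OF insert.hyps(2)]])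
  also have "\<dots> = (\<Sum>b\<in>?Bx. card (bijS A (B - {b}) lf))"
    using fin insert.hyps insert.prems by (intro card_SigmaI) (auto intro: bijS_finite)
  also have "\<dots> = (\<Sum>b\<in>?Bx. \<Prod>i<m. Fnat (card {c\<in>B. lf c = i} - (if i = ?x then 1 else 0)) (card {c\<in>A. lf c = i}))"
  proof (intro sum.cong refl)
    fix b assume b: "b \<in> ?Bx"
    have "card (bijS A (B - {b}) lf) = (\<Prod>i<m. Fnat (card {c\<in>B - {b}. lf c = i}) (card {c\<in>A. lf c = i}))"
      using insert.prems by (intro insert.IH) auto
    also have "\<dots> = (\<Prod>i<m. Fnat (card {c\<in>B. lf c = i} - (if i = ?x then 1 else 0)) (card {c\<in>A. lf c = i}))"
    proof -
      have fB: "finite B" using insert.prems by simp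
      have "b \<in> B" "lf b = ?x" using b by auto
      note cd = card_label_diff[where lf=lf, OF fB this]
      show ?thesis by (intro prod.cong refl, subst cd) (rule refl)
    qed
    finally show "card (bijS A (B - {b}) lf) = \<dots>" .
  qed
  also have "\<dots> = card ?Bx * (\<Prod>i<m. Fnat (card {c\<in>B. lf c = i} - (if i = ?x then 1 else 0)) (card {c\<in>A. lf c = i}))"
    by simp
  also have "\<dots> = (\<Prod>i<m. Fnat (card {c\<in>B. lf c = i}) (card {c\<in>insert a A. lf c = i}))"
  proof -
    let ?f = "\<lambda>i. Fnat (card {c\<in>B. lf c = i} - (if i = ?x then 1 else 0)) (card {c\<in>A. lf c = i})"
    let ?g = "\<lambda>i. Fnat (card {c\<in>B. lf c = i}) (card {c\<in>insert a A. lf c = i})"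
    have rest: "(\<Prod>i\<in>{..<m} - {?x}. ?f i) = (\<Prod>i\<in>{..<m} - {?x}. ?g i)"
    proof (intro prod.cong refl)
      fix i assume "i \<in> {..<m} - {?x}"
      then show "?f i = ?g i"
        by (simp only: card_label_insert[where lf=lf, OF insert.hyps(1,2)]) simp
    qed
    have key: "card ?Bx * ?f ?x = ?g ?x"
    proof -
      have ci: "card {c\<in>insert a A. lf c = ?x} = Suc (card {c\<in>A. lf c = ?x})"
        by (simp only: card_label_insert[where lf=lf, OF insert.hyps(1,2)]) simp
      show ?thesis unfolding ci
        by (cases "card ?Bx") (auto simp: Fnat_def)
    qed
    have "card ?Bx * (\<Prod>i<m. ?f i) = card ?Bx * (?f ?x * (\<Prod>i\<in>{..<m} - {?x}. ?f i))"
      using xm by (subst prod.remove[of _ ?x]) auto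
    also have "\<dots> = ?g ?x * (\<Prod>i\<in>{..<m} - {?x}. ?g i)"
      using key rest by (simp add: mult.assoc[symmetric])
    also have "\<dots> = (\<Prod>i<m. ?g i)"
      using xm by (subst (2) prod.remove[of _ ?x]) auto
    finally show ?thesis .
  qed
  finally show ?case .
qed


definition keyf :: "nat list \<Rightarrow> (nat \<Rightarrow> nat) \<Rightarrow> nat \<Rightarrow> nat \<times> nat" where
  "keyf w e j = (w ! j, e j)"
definition cls :: "nat list \<Rightarrow> (nat \<Rightarrow> nat) \<Rightarrow> nat \<Rightarrow> nat set" where
  "cls w e j = {j'. j' < length w \<and> keyf w e j' = keyf w e j}"
definition repf :: "nat list \<Rightarrow> (nat \<Rightarrow> nat) \<Rightarrow> nat \<Rightarrow> nat" where
  "repf w e j = (LEAST j'. j' < length w \<and> keyf w e j' = keyf w e j)"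
definition pat :: "nat list \<Rightarrow> (nat \<Rightarrow> nat) \<Rightarrow> nat \<Rightarrow> nat" where
  "pat w e = restrict (repf w e) {..<length w}"
definition Rs :: "nat list \<Rightarrow> (nat \<Rightarrow> nat) \<Rightarrow> nat set" where
  "Rs w e = {j. j < length w \<and> repf w e j = j}"
definition NS :: "nat list \<Rightarrow> (nat \<Rightarrow> nat) \<Rightarrow> bool" where
  "NS w e \<longleftrightarrow> (\<forall>j<length w. 2 \<le> card (cls w e j))"
definition PE :: "nat \<Rightarrow> nat \<Rightarrow> (nat \<Rightarrow> nat) set" where
  "PE k n = {..<k} \<rightarrow>\<^sub>E {..<n}"

lemma finite_cls[simp]: "finite (cls w e j)"
  by (simp add: cls_def)

lemma finite_PE[simp]: "finite (PE k n)"
  by (simp add: PE_def finite_PiE)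

lemma card_PE: "card (PE k n) = n ^ k"
  by (simp add: PE_def card_PiE)

lemma rep_props:
  assumes "j < length w"
  shows "repf w e j < length w" "keyf w e (repf w e j) = keyf w e j" "repf w e j \<le> j"
proof -
  have ex: "j < length w \<and> keyf w e j = keyf w e j" using assms by simp
  show "repf w e j < length w" "keyf w e (repf w e j) = keyf w e j"
    using LeastI[of "\<lambda>j'. j' < length w \<and> keyf w e j' = keyf w e j", OF ex] by (auto simp: repf_def)
  show "repf w e j \<le> j" unfolding repf_def by (rule Least_le) (use ex in auto)
qed

lemma rep_eq: "keyf w e j = keyf w e j' \<Longrightarrow> repf w e j = repf w e j'"
  by (simp add: repf_def)

lemma rep_eq_iff:
  assumes "j < length w" "j' < length w"
  shows "repf w e j = repf w e j' \<longleftrightarrow> keyf w e j = keyf w e j'"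
  using rep_props[OF assms(1), of e] rep_props[OF assms(2), of e] rep_eq[of w e j j']
  by metis

lemma rep_idem: "j < length w \<Longrightarrow> repf w e (repf w e j) = repf w e j"
  using rep_props rep_eq by metis

lemma e_rep: "j < length w \<Longrightarrow> e (repf w e j) = e j"
  using rep_props(2)[of j w e] by (simp add: keyf_def)

lemma cls_rep: "j < length w \<Longrightarrow> cls w e (repf w e j) = cls w e j"
  using rep_props(2)[of j w e] by (simp add: cls_def)

lemma rep_in_Rs: "j < length w \<Longrightarrow> repf w e j \<in> Rs w e"
  using rep_props(1)[of j w e] rep_idem[of j w e] by (simp add: Rs_def)

lemma mem_cls: "j < length w \<Longrightarrow> j \<in> cls w e j"
  by (simp add: cls_def)

lemma cls_sub: "cls w e j \<subseteq> {..<length w}"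
  by (auto simp: cls_def)

lemma Rs_sub: "Rs w e \<subseteq> {..<length w}"
  by (auto simp: Rs_def)

lemma cls_disj:
  assumes "a \<in> Rs w e" "b \<in> Rs w e" "a \<noteq> b"
  shows "cls w e a \<inter> cls w e b = {}"
proof (rule ccontr)
  assume "cls w e a \<inter> cls w e b \<noteq> {}"
  then obtain j where "j \<in> cls w e a" "j \<in> cls w e b" by auto
  then have "keyf w e a = keyf w e b" by (simp add: cls_def)
  then have "repf w e a = repf w e b" by (rule rep_eq)
  then show False using assms by (simp add: Rs_def)
qed

lemma UN_cls: "{..<length w} = (\<Union>a\<in>Rs w e. cls w e a)"
proof (intro equalityI subsetI)
  fix j assume "j \<in> {..<length w}"
  then have j: "j < length w" by simp
  then show "j \<in> (\<Union>a\<in>Rs w e. cls w e a)"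
    using rep_in_Rs[OF j, of e] cls_rep[OF j, of e] mem_cls[OF j, of e] by blast
next
  fix j assume "j \<in> (\<Union>a\<in>Rs w e. cls w e a)"
  then show "j \<in> {..<length w}" using cls_sub by blast
qed

lemma sum_cls: "(\<Sum>a\<in>Rs w e. card (cls w e a)) = length w"
proof -
  have fin: "finite (Rs w e)" using Rs_sub finite_subset by blast
  have "card (\<Union>a\<in>Rs w e. cls w e a) = (\<Sum>a\<in>Rs w e. card (cls w e a))"
    using fin cls_disj by (intro card_UN_disjoint) auto
  then show ?thesis using UN_cls[of w e] by (metis card_lessThan)
qed

lemma NS_Rs: "NS w e \<Longrightarrow> 2 * card (Rs w e) \<le> length w"
proof -
  assume ns: "NS w e"
  have "2 * card (Rs w e) = (\<Sum>a\<in>Rs w e. 2)" by simp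
  also have "\<dots> \<le> (\<Sum>a\<in>Rs w e. card (cls w e a))"
    using ns by (intro sum_mono) (auto simp: NS_def Rs_def)
  finally show ?thesis using sum_cls[of w e] by simp
qed

lemma NS_Rs_eq:
  assumes ns: "NS w e" and eq: "2 * card (Rs w e) = length w" and j: "j < length w"
  shows "card (cls w e j) = 2"
proof -
  have fin: "finite (Rs w e)" using Rs_sub finite_subset by blast
  have ge: "\<forall>a\<in>Rs w e. 2 \<le> card (cls w e a)" using ns by (auto simp: NS_def Rs_def)
  have "(\<Sum>a\<in>Rs w e. card (cls w e a) - 2) = (\<Sum>a\<in>Rs w e. card (cls w e a)) - (\<Sum>a\<in>Rs w e. 2)"
    using ge by (intro sum_subtractf_nat) auto
  also have "\<dots> = 0" using sum_cls[of w e] eq by simp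
  finally have "\<forall>a\<in>Rs w e. card (cls w e a) - 2 = 0" using fin by simp
  then have "card (cls w e (repf w e j)) \<le> 2" using rep_in_Rs[OF j] by auto
  moreover have "2 \<le> card (cls w e (repf w e j))" using ge rep_in_Rs[OF j] by auto
  ultimately show ?thesis using cls_rep[OF j] by simp
qed

lemma all2_Rs:
  assumes "\<forall>j<length w. card (cls w e j) = 2"
  shows "2 * card (Rs w e) = length w"
proof -
  have "length w = (\<Sum>a\<in>Rs w e. card (cls w e a))" using sum_cls[of w e] by simp
  also have "\<dots> = (\<Sum>a\<in>Rs w e. 2)" using assms by (intro sum.cong refl) (auto simp: Rs_def)
  finally show ?thesis by simp
qed

lemma pat_PE: "pat w e \<in> PE (length w) (length w)"
  using rep_props(1) by (auto simp: pat_def PE_def)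

lemma pat_fix: "pat w e = p \<Longrightarrow> {j. j < length w \<and> p j = j} = Rs w e"
  by (auto simp: pat_def Rs_def)

lemma card_pat:
  "card {e \<in> PE (length w) n. pat w e = p} \<le> n ^ card {j. j < length w \<and> p j = j}"
proof -
  let ?k = "length w"
  let ?F = "{j. j < ?k \<and> p j = j}"
  have inj: "inj_on (\<lambda>e. restrict e ?F) {e \<in> PE ?k n. pat w e = p}"
  proof (rule inj_onI)
    fix e e' assume e: "e \<in> {e \<in> PE ?k n. pat w e = p}" and e': "e' \<in> {e \<in> PE ?k n. pat w e = p}"
      and eq: "restrict e ?F = restrict e' ?F"
    show "e = e'"
    proof (rule ext)
      fix j
      show "e j = e' j"
      proof (cases "j < ?k")
        case True
        have pj1: "p j = repf w e j" using e True by (auto simp: pat_def)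
        have pj2: "p j = repf w e' j" using e' True by (auto simp: pat_def)
        note pj = pj1 pj2
        have lt: "p j < ?k" using pj(1) rep_props(1)[OF True, of e] by simp
        have "p (p j) = repf w e (p j)" using e lt by (auto simp: pat_def)
        also have "\<dots> = p j" using pj(1) rep_idem[OF True, of e] by simp
        finally have inF: "p j \<in> ?F" using lt by simp
        have "e j = e (p j)" using pj(1) e_rep[OF True, of e] by simp
        also have "\<dots> = e' (p j)" using fun_cong[OF eq, of "p j"] inF by simp
        also have "\<dots> = e' j" using pj(2) e_rep[OF True, of e'] by simp
        finally show ?thesis .
      next
        case False
        then show ?thesis using e e' by (auto simp: PE_def PiE_def extensional_def)
      qed
    qed
  qed
  have sub: "(\<lambda>e. restrict e ?F) ` {e \<in> PE ?k n. pat w e = p} \<subseteq> ?F \<rightarrow>\<^sub>E {..<n}"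
  proof (rule image_subsetI)
    fix e assume "e \<in> {e \<in> PE ?k n. pat w e = p}"
    then have "\<forall>x\<in>{..<?k}. e x \<in> {..<n}" by (simp add: PE_def PiE_iff)
    then show "restrict e ?F \<in> ?F \<rightarrow>\<^sub>E {..<n}" by (simp add: restrict_PiE_iff)
  qed
  have "card {e \<in> PE ?k n. pat w e = p} = card ((\<lambda>e. restrict e ?F) ` {e \<in> PE ?k n. pat w e = p})"
    using inj by (simp add: card_image)
  also have "\<dots> \<le> card (?F \<rightarrow>\<^sub>E {..<n})"
    by (rule card_mono[OF _ sub]) (simp add: finite_PiE)
  also have "\<dots> = n ^ card ?F" by (simp add: card_PiE)
  finally show ?thesis .
qed

lemma card_by_pat:
  "card {e \<in> PE (length w) n. P e} \<le> (\<Sum>p\<in>PE (length w) (length w). card {e \<in> PE (length w) n. P e \<and> pat w e = p})"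
proof -
  have "{e \<in> PE (length w) n. P e} = (\<Union>p\<in>PE (length w) (length w). {e \<in> PE (length w) n. P e \<and> pat w e = p})"
    using pat_PE by auto
  then show ?thesis by (simp add: card_UN_le)
qed

lemma count_gen:
  assumes d: "\<And>e. e \<in> PE (length w) n \<Longrightarrow> P e \<Longrightarrow> card (Rs w e) \<le> d" and n: "n \<ge> 1"
  shows "card {e \<in> PE (length w) n. P e} \<le> length w ^ length w * n ^ d"
proof -
  let ?k = "length w"
  have each: "card {e \<in> PE ?k n. P e \<and> pat w e = p} \<le> n ^ d" for p
  proof (cases "{e \<in> PE ?k n. P e \<and> pat w e = p} = {}")
    case True then show ?thesis unfolding True by simp
  next
    case False
    then obtain e0 where e0: "e0 \<in> PE ?k n" "P e0" "pat w e0 = p" by auto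
    have "card {e \<in> PE ?k n. P e \<and> pat w e = p} \<le> card {e \<in> PE ?k n. pat w e = p}"
      by (rule card_mono) auto
    also have "\<dots> \<le> n ^ card {j. j < ?k \<and> p j = j}" by (rule card_pat)
    also have "\<dots> = n ^ card (Rs w e0)" using pat_fix[OF e0(3)] by simp
    also have "\<dots> \<le> n ^ d" using d[OF e0(1,2)] n by (intro power_increasing) auto
    finally show ?thesis .
  qed
  have "card {e \<in> PE ?k n. P e} \<le> (\<Sum>p\<in>PE ?k ?k. card {e \<in> PE ?k n. P e \<and> pat w e = p})"
    by (rule card_by_pat)
  also have "\<dots> \<le> (\<Sum>p\<in>PE ?k ?k. n ^ d)" by (intro sum_mono each)
  also have "\<dots> = ?k ^ ?k * n ^ d" by (simp add: card_PE)
  finally show ?thesis .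
qed


lemma half_lemma:
  fixes x y n :: nat
  assumes "x < n" "y < n" "int n dvd 2 * (int x - int y)" "(2 * x < n) = (2 * y < n)"
  shows "x = y"
proof -
  obtain t where t: "2 * (int x - int y) = int n * t" using assms(3) by (auto elim: dvdE)
  consider "t \<ge> 1" | "t \<le> -1" | "t = 0" by linarith
  then show ?thesis
  proof cases
    case 1
    then have "int n * t \<ge> int n * 1" by (intro mult_left_mono) auto
    then have "2 * int x \<ge> int n + 2 * int y" using t by simp
    then show ?thesis using assms(1,2,4) by linarith
  next
    case 2
    then have "int n * t \<le> int n * (-1)" by (intro mult_left_mono) auto
    then have "2 * int y \<ge> int n + 2 * int x" using t by simp
    then show ?thesis using assms(1,2,4) by linarith
  next
    case 3
    then show ?thesis using t by simp
  qed
qed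

definition altsum :: "nat \<Rightarrow> (nat \<Rightarrow> nat) \<Rightarrow> int" where
  "altsum k e = (\<Sum>j<k. (-1) ^ j * int (e j))"

definition B2p :: "nat list \<Rightarrow> nat \<Rightarrow> (nat \<Rightarrow> nat) \<Rightarrow> nat \<Rightarrow> (nat \<Rightarrow> nat) set" where
  "B2p w n p a = {e \<in> PE (length w) n. int n dvd altsum (length w) e \<and> (\<forall>j<length w. card (cls w e j) = 2)
      \<and> pat w e = p \<and> a < length w \<and> repf w e a = a
      \<and> (\<exists>b<length w. b \<noteq> a \<and> keyf w e b = keyf w e a \<and> (even b \<longleftrightarrow> even a))}"

lemma card2_eq:
  assumes "card S = 2" "a \<in> S" "b \<in> S" "a \<noteq> b" "finite S"
  shows "S = {a, b}"
proof -
  have sub: "{a, b} \<subseteq> S" using assms by auto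
  have cc: "card {a, b} = card S" using assms by simp
  show ?thesis using card_subset_eq[OF assms(5) sub cc] by simp
qed

lemma B2p_inj:
  "inj_on (\<lambda>e. (restrict e ({j. j < length w \<and> p j = j} - {a}), 2 * e a < n)) (B2p w n p a)"
proof (rule inj_onI)
  let ?k = "length w"
  let ?F = "{j. j < ?k \<and> p j = j}"
  fix e e' assume e: "e \<in> B2p w n p a" and e': "e' \<in> B2p w n p a"
    and eq: "(restrict e (?F - {a}), 2 * e a < n) = (restrict e' (?F - {a}), 2 * e' a < n)"
  have ePE: "e \<in> PE ?k n" and e'PE: "e' \<in> PE ?k n" using e e' by (auto simp: B2p_def)
  have pe: "pat w e = p" and pe': "pat w e' = p" using e e' by (auto simp: B2p_def)
  have ak: "a < ?k" and ra: "repf w e a = a" using e by (auto simp: B2p_def)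
  have pj1: "p j = repf w e j" if "j < ?k" for j
    using pe that by (auto simp: pat_def)
  have pj2: "p j = repf w e' j" if "j < ?k" for j
    using pe' that by (auto simp: pat_def)
  note pj = pj1 pj2
  have c1: "e j = e' j" if j: "j < ?k" and pa: "p j \<noteq> a" for j
  proof -
    have lt: "p j < ?k" using pj(1)[OF j] rep_props(1)[OF j, of e] by simp
    have "p (p j) = repf w e (p j)" using pj(1)[OF lt] .
    also have "\<dots> = p j" using pj(1)[OF j] rep_idem[OF j, of e] by simp
    finally have inF: "p j \<in> ?F - {a}" using lt pa by simp
    have "e j = e (p j)" using pj(1)[OF j] e_rep[OF j, of e] by simp
    also have "\<dots> = e' (p j)" using fun_cong[OF arg_cong[OF eq, of fst], of "p j"] inF by simp
    also have "\<dots> = e' j" using pj(2)[OF j] e_rep[OF j, of e'] by simp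
    finally show ?thesis .
  qed
  have c2: "e j = e a \<and> e' j = e' a" if j: "j < ?k" and pa: "p j = a" for j
    using pj[OF j] pa e_rep[OF j, of e] e_rep[OF j, of e'] by simp
  obtain b where b: "b < ?k" "b \<noteq> a" "keyf w e b = keyf w e a" "even b \<longleftrightarrow> even a"
    using e by (auto simp: B2p_def)
  have clsab: "cls w e a = {a, b}"
  proof (rule card2_eq)
    show "card (cls w e a) = 2" using e ak by (auto simp: B2p_def)
  qed (use ak b in \<open>auto simp: cls_def\<close>)
  have setab: "{j. j < ?k \<and> p j = a} = {a, b}"
  proof (intro equalityI subsetI)
    fix j assume "j \<in> {j. j < ?k \<and> p j = a}"
    then have j: "j < ?k" "p j = a" by auto
    then have "repf w e j = repf w e a" using pj(1)[OF j(1)] ra by simp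
    then have "keyf w e j = keyf w e a" using rep_eq_iff[OF j(1) ak] by simp
    then have "j \<in> cls w e a" using j by (simp add: cls_def)
    then show "j \<in> {a, b}" using clsab by simp
  next
    fix j assume "j \<in> {a, b}"
    moreover have "p a = a" using pj(1)[OF ak] ra by simp
    moreover have "p b = a" using pj(1)[OF b(1)] rep_eq[OF b(3)] ra by simp
    ultimately show "j \<in> {j. j < ?k \<and> p j = a}" using ak b by auto
  qed
  define d where "d = int (e a) - int (e' a)"
  have diff: "altsum ?k e - altsum ?k e' = (\<Sum>j<?k. (-1) ^ j * (int (e j) - int (e' j)))"
    by (simp add: altsum_def sum_subtractf algebra_simps)
  also have "\<dots> = (\<Sum>j\<in>{a, b}. (-1) ^ j * (int (e j) - int (e' j)))"
  proof (rule sum.mono_neutral_right)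
    show "{a, b} \<subseteq> {..<?k}" using ak b by auto
    show "\<forall>j\<in>{..<?k} - {a, b}. (-1) ^ j * (int (e j) - int (e' j)) = 0"
    proof
      fix j assume "j \<in> {..<?k} - {a, b}"
      then have "j < ?k" "p j \<noteq> a" using setab by auto
      then show "(-1) ^ j * (int (e j) - int (e' j)) = 0" using c1 by simp
    qed
  qed simp
  also have "\<dots> = (-1) ^ a * d + (-1) ^ b * d"
    using b c2[OF b(1)] pj(1)[OF b(1)] rep_eq[OF b(3)] ra by (simp add: d_def)
  also have "\<dots> = 2 * ((-1) ^ a * d)"
    using b(4) by (simp add: minus_one_power_iff)
  finally have "altsum ?k e - altsum ?k e' = 2 * ((-1) ^ a * d)" .
  moreover have "int n dvd altsum ?k e" "int n dvd altsum ?k e'" using e e' by (auto simp: B2p_def)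
  ultimately have "int n dvd 2 * ((-1) ^ a * d)" by (metis dvd_diff)
  then have "int n dvd (-1) ^ a * (2 * ((-1) ^ a * d))" by (rule dvd_mult)
  then have dv: "int n dvd 2 * d" by (simp add: algebra_simps)
  have ea: "e a < n" "e' a < n" using ePE e'PE ak by (auto simp: PE_def PiE_iff)
  have "e a = e' a" using half_lemma[OF ea] dv eq by (simp add: d_def)
  then have all: "e j = e' j" if "j < ?k" for j
    using c1[OF that] c2[OF that] by (cases "p j = a") auto
  show "e = e'"
  proof (rule ext)
    fix j show "e j = e' j"
      using all ePE e'PE by (cases "j < ?k") (auto simp: PE_def PiE_iff extensional_def)
  qed
qed

lemma card_B2p:
  assumes n: "n \<ge> 1"
  shows "card (B2p w n p a) \<le> 2 * n ^ (length w div 2 - 1)"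
proof (cases "B2p w n p a = {}")
  case True then show ?thesis unfolding True by simp
next
  case False
  let ?k = "length w"
  let ?F = "{j. j < ?k \<and> p j = j}"
  obtain e0 where e0: "e0 \<in> B2p w n p a" using False by auto
  have "?F = Rs w e0" using e0 pat_fix[of w e0 p] by (auto simp: B2p_def)
  moreover have "2 * card (Rs w e0) = ?k" using e0 all2_Rs[of w e0] by (auto simp: B2p_def)
  ultimately have cF: "card ?F = ?k div 2" by simp
  have aF: "a \<in> ?F" using e0 by (auto simp: B2p_def pat_def)
  have finF: "finite ?F" by simp
  have sub: "(\<lambda>e. (restrict e (?F - {a}), 2 * e a < n)) ` B2p w n p a \<subseteq> ((?F - {a}) \<rightarrow>\<^sub>E {..<n}) \<times> UNIV"
  proof (rule image_subsetI)
    fix e assume "e \<in> B2p w n p a"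
    then have "\<forall>x\<in>{..<?k}. e x \<in> {..<n}" by (simp add: B2p_def PE_def PiE_iff)
    then show "(restrict e (?F - {a}), 2 * e a < n) \<in> ((?F - {a}) \<rightarrow>\<^sub>E {..<n}) \<times> UNIV"
      by (simp add: restrict_PiE_iff)
  qed
  have "card (B2p w n p a) = card ((\<lambda>e. (restrict e (?F - {a}), 2 * e a < n)) ` B2p w n p a)"
    using B2p_inj by (simp add: card_image)
  also have "\<dots> \<le> card (((?F - {a}) \<rightarrow>\<^sub>E {..<n}) \<times> (UNIV :: bool set))"
    by (rule card_mono[OF _ sub]) (simp add: finite_PiE)
  also have "\<dots> = n ^ (card ?F - 1) * 2"
    using aF finF by (simp add: card_cartesian_product card_PiE card_Diff_singleton)
  finally show ?thesis using cF by simp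
qed

definition B2 :: "nat list \<Rightarrow> nat \<Rightarrow> (nat \<Rightarrow> nat) set" where
  "B2 w n = {e \<in> PE (length w) n. int n dvd altsum (length w) e \<and> (\<forall>j<length w. card (cls w e j) = 2)
      \<and> (\<exists>a b. a < length w \<and> b < length w \<and> a \<noteq> b \<and> keyf w e a = keyf w e b \<and> (even a \<longleftrightarrow> even b))}"

lemma B2_sub: "B2 w n \<subseteq> (\<Union>p\<in>PE (length w) (length w). \<Union>a\<in>{..<length w}. B2p w n p a)"
proof (rule subsetI)
  let ?k = "length w"
  fix e assume e: "e \<in> B2 w n"
  then obtain a b where ab: "a < ?k" "b < ?k" "a \<noteq> b" "keyf w e a = keyf w e b" "even a \<longleftrightarrow> even b"
    by (auto simp: B2_def)
  have c2: "card (cls w e a) = 2" using e ab by (auto simp: B2_def)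
  have clsab: "cls w e a = {a, b}"
    by (rule card2_eq[OF c2]) (use ab in \<open>auto simp: cls_def\<close>)
  define a' where "a' = repf w e a"
  have a'in: "a' \<in> {a, b}" using clsab rep_props[OF ab(1), of e] by (auto simp: a'_def cls_def)
  define b' where "b' = (if a' = a then b else a)"
  have props: "a' < ?k" "repf w e a' = a'" "b' < ?k" "b' \<noteq> a'" "keyf w e b' = keyf w e a'" "(even b' \<longleftrightarrow> even a')"
    using a'in ab rep_idem[OF ab(1), of e] by (auto simp: a'_def b'_def)
  have "e \<in> B2p w n (pat w e) a'"
    using e props unfolding B2p_def B2_def by blast
  then show "e \<in> (\<Union>p\<in>PE ?k ?k. \<Union>a\<in>{..<?k}. B2p w n p a)"
    using pat_PE[of w e] props(1) by blast
qed

lemma card_B2: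
  assumes n: "n \<ge> 1"
  shows "card (B2 w n) \<le> length w ^ length w * length w * (2 * n ^ (length w div 2 - 1))"
proof -
  let ?k = "length w"
  have "card (B2 w n) \<le> card (\<Union>p\<in>PE ?k ?k. \<Union>a\<in>{..<?k}. B2p w n p a)"
    by (rule card_mono[OF _ B2_sub]) (auto intro: finite_subset[OF _ finite_PE] simp: B2p_def)
  also have "\<dots> \<le> (\<Sum>p\<in>PE ?k ?k. card (\<Union>a\<in>{..<?k}. B2p w n p a))"
    by (rule card_UN_le) simp
  also have "\<dots> \<le> (\<Sum>p\<in>PE ?k ?k. \<Sum>a\<in>{..<?k}. card (B2p w n p a))"
    by (intro sum_mono card_UN_le) simp
  also have "\<dots> \<le> (\<Sum>p\<in>PE ?k ?k. \<Sum>a\<in>{..<?k}. 2 * n ^ (?k div 2 - 1))"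
    by (intro sum_mono card_B2p n)
  also have "\<dots> = ?k ^ ?k * ?k * (2 * n ^ (?k div 2 - 1))" by (simp add: card_PE)
  finally show ?thesis .
qed


definition Ev :: "nat \<Rightarrow> nat set" where "Ev k = {j. j < k \<and> even j}"
definition Od :: "nat \<Rightarrow> nat set" where "Od k = {j. j < k \<and> odd j}"

definition Sig :: "nat list \<Rightarrow> (nat \<Rightarrow> nat) set" where
  "Sig w = bijS (Od (length w)) (Ev (length w)) (\<lambda>j. w ! j)"

definition Gs :: "nat list \<Rightarrow> nat \<Rightarrow> (nat \<Rightarrow> nat) \<Rightarrow> (nat \<Rightarrow> nat) set" where
  "Gs w n \<sigma> = {e \<in> PE (length w) n. (\<forall>q\<in>Od (length w). e q = e (\<sigma> q))
      \<and> (\<forall>a\<in>Ev (length w). \<forall>b\<in>Ev (length w). a \<noteq> b \<and> w ! a = w ! b \<longrightarrow> e a \<noteq> e b)}"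

lemma card_Ev: "card (Ev k) = (k + 1) div 2"
proof (induction k)
  case 0 then show ?case by (simp add: Ev_def)
next
  case (Suc k)
  have "Ev (Suc k) = (if even k then insert k (Ev k) else Ev k)"
    by (auto simp: Ev_def less_Suc_eq)
  moreover have "k \<notin> Ev k" by (simp add: Ev_def)
  moreover have "finite (Ev k)" by (simp add: Ev_def)
  ultimately show ?case using Suc by auto
qed

lemma card_Od: "card (Od k) = k div 2"
proof (induction k)
  case 0 then show ?case by (simp add: Od_def)
next
  case (Suc k)
  have "Od (Suc k) = (if odd k then insert k (Od k) else Od k)"
    by (auto simp: Od_def less_Suc_eq)
  moreover have "k \<notin> Od k" by (simp add: Od_def)
  moreover have "finite (Od k)" by (simp add: Od_def)
  ultimately show ?case using Suc by (auto elim: oddE)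
qed

lemma finite_Ev[simp]: "finite (Ev k)" and finite_Od[simp]: "finite (Od k)"
  by (simp_all add: Ev_def Od_def)

lemma Sig_props:
  assumes "\<sigma> \<in> Sig w"
  shows "bij_betw \<sigma> (Od (length w)) (Ev (length w))" "\<And>q. q \<in> Od (length w) \<Longrightarrow> w ! (\<sigma> q) = w ! q"
    "\<And>q. q \<in> Od (length w) \<Longrightarrow> \<sigma> q \<in> Ev (length w)"
    "\<sigma> \<in> Od (length w) \<rightarrow>\<^sub>E Ev (length w)"
  using assms by (auto simp: Sig_def bijS_def bij_betw_def)

lemma G1:
  assumes s: "\<sigma> \<in> Sig w" and e: "e \<in> Gs w n \<sigma>"
  shows "altsum (length w) e = 0"
proof -
  let ?k = "length w"
  have split: "{..<?k} = Ev ?k \<union> Od ?k" "Ev ?k \<inter> Od ?k = {}" by (auto simp: Ev_def Od_def)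
  have "altsum ?k e = (\<Sum>j\<in>Ev ?k. (-1) ^ j * int (e j)) + (\<Sum>j\<in>Od ?k. (-1) ^ j * int (e j))"
    unfolding altsum_def split(1) by (rule sum.union_disjoint) (use split(2) in auto)
  also have "(\<Sum>j\<in>Ev ?k. (-1) ^ j * int (e j)) = (\<Sum>j\<in>Ev ?k. int (e j))"
    by (intro sum.cong refl) (auto simp: Ev_def)
  also have "(\<Sum>j\<in>Od ?k. (-1) ^ j * int (e j)) = - (\<Sum>j\<in>Od ?k. int (e j))"
    by (simp add: sum_negf[symmetric], intro sum.cong refl) (auto simp: Od_def)
  also have "(\<Sum>j\<in>Od ?k. int (e j)) = (\<Sum>j\<in>Od ?k. int (e (\<sigma> j)))"
    using e by (intro sum.cong refl) (auto simp: Gs_def)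
  also have "\<dots> = (\<Sum>j\<in>Ev ?k. int (e j))"
    by (rule sum.reindex_bij_betw[OF Sig_props(1)[OF s]])
  finally show ?thesis by simp
qed

lemma G2:
  assumes s: "\<sigma> \<in> Sig w" and e: "e \<in> Gs w n \<sigma>" and j: "j < length w"
  shows "card (cls w e j) = 2"
proof -
  let ?k = "length w"
  have bij: "bij_betw \<sigma> (Od ?k) (Ev ?k)" using Sig_props(1)[OF s] .
  have lab: "\<And>q. q \<in> Od ?k \<Longrightarrow> w ! (\<sigma> q) = w ! q" using Sig_props(2)[OF s] .
  have sev: "\<And>q. q \<in> Od ?k \<Longrightarrow> \<sigma> q \<in> Ev ?k" using Sig_props(3)[OF s] .
  have eo: "\<And>q. q \<in> Od ?k \<Longrightarrow> e q = e (\<sigma> q)" using e by (auto simp: Gs_def)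
  have dist: "\<And>a b. a \<in> Ev ?k \<Longrightarrow> b \<in> Ev ?k \<Longrightarrow> w ! a = w ! b \<Longrightarrow> e a = e b \<Longrightarrow> a = b"
    using e by (auto simp: Gs_def)
  have injs: "inj_on \<sigma> (Od ?k)" using bij by (simp add: bij_betw_def)
  have key_o: "keyf w e (\<sigma> q) = keyf w e q" if "q \<in> Od ?k" for q
    using lab[OF that] eo[OF that] by (simp add: keyf_def)
  have clso: "cls w e q = {q, \<sigma> q}" if q: "q \<in> Od ?k" for q
  proof (intro equalityI subsetI)
    fix x assume x: "x \<in> cls w e q"
    then have xk: "x < ?k" and kx: "keyf w e x = keyf w e q" by (auto simp: cls_def)
    show "x \<in> {q, \<sigma> q}"
    proof (cases "even x")
      case True
      then have xe: "x \<in> Ev ?k" using xk by (simp add: Ev_def)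
      have "keyf w e x = keyf w e (\<sigma> q)" using kx key_o[OF q] by simp
      then have "x = \<sigma> q" using dist[OF xe sev[OF q]] by (simp add: keyf_def)
      then show ?thesis by simp
    next
      case False
      then have xo: "x \<in> Od ?k" using xk by (simp add: Od_def)
      have "keyf w e (\<sigma> x) = keyf w e (\<sigma> q)" using kx key_o[OF q] key_o[OF xo] by simp
      then have "\<sigma> x = \<sigma> q" using dist[OF sev[OF xo] sev[OF q]] by (simp add: keyf_def)
      then have "x = q" using injs xo q by (auto simp: inj_on_def)
      then show ?thesis by simp
    qed
  next
    fix x assume "x \<in> {q, \<sigma> q}"
    then show "x \<in> cls w e q"
      using q sev[OF q] key_o[OF q] by (auto simp: cls_def Od_def Ev_def)
  qed
  have ne: "q \<noteq> \<sigma> q" if "q \<in> Od ?k" for q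
    using that sev[OF that] by (auto simp: Od_def Ev_def)
  show ?thesis
  proof (cases "odd j")
    case True
    then have jo: "j \<in> Od ?k" using j by (simp add: Od_def)
    show ?thesis using clso[OF jo] ne[OF jo] by simp
  next
    case False
    then have je: "j \<in> Ev ?k" using j by (simp add: Ev_def)
    have "j \<in> \<sigma> ` Od ?k" using je bij by (simp add: bij_betw_def)
    then obtain q where q: "q \<in> Od ?k" "\<sigma> q = j" by (auto simp del: Od_def)
    have "cls w e j = cls w e q" using key_o[OF q(1)] q(2) by (simp add: cls_def)
    then show ?thesis using clso[OF q(1)] ne[OF q(1)] by simp
  qed
qed

lemma G3:
  assumes s: "\<sigma> \<in> Sig w" and s': "\<sigma>' \<in> Sig w" and e: "e \<in> Gs w n \<sigma>" and e': "e \<in> Gs w n \<sigma>'"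
  shows "\<sigma> = \<sigma>'"
proof (rule ext)
  let ?k = "length w"
  fix q
  show "\<sigma> q = \<sigma>' q"
  proof (cases "q \<in> Od ?k")
    case True
    have "\<sigma> q \<in> Ev ?k" "\<sigma>' q \<in> Ev ?k" using Sig_props(3)[OF s True] Sig_props(3)[OF s' True] by auto
    moreover have "w ! (\<sigma> q) = w ! (\<sigma>' q)" using Sig_props(2)[OF s True] Sig_props(2)[OF s' True] by simp
    moreover have "e (\<sigma> q) = e (\<sigma>' q)" using e e' True by (auto simp: Gs_def)
    ultimately show ?thesis using e by (auto simp: Gs_def)
  next
    case False
    then show ?thesis using Sig_props(4)[OF s] Sig_props(4)[OF s'] by (auto simp: PiE_def extensional_def)
  qed
qed

lemma G4_upper:
  assumes s: "\<sigma> \<in> Sig w"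
  shows "card (Gs w n \<sigma>) \<le> n ^ card (Ev (length w))"
proof -
  let ?k = "length w"
  have inj: "inj_on (\<lambda>e. restrict e (Ev ?k)) (Gs w n \<sigma>)"
  proof (rule inj_onI)
    fix e e' assume e: "e \<in> Gs w n \<sigma>" and e': "e' \<in> Gs w n \<sigma>" and eq: "restrict e (Ev ?k) = restrict e' (Ev ?k)"
    have ev: "e j = e' j" if "j \<in> Ev ?k" for j using fun_cong[OF eq, of j] that by simp
    show "e = e'"
    proof (rule ext)
      fix j
      show "e j = e' j"
      proof (cases "j \<in> Ev ?k")
        case True then show ?thesis using ev by simp
      next
        case False
        show ?thesis
        proof (cases "j \<in> Od ?k")
          case True
          have "e j = e (\<sigma> j)" "e' j = e' (\<sigma> j)" using e e' True by (auto simp: Gs_def)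
          then show ?thesis using ev[OF Sig_props(3)[OF s True]] by simp
        next
          case False
          then have "\<not> j < ?k" using \<open>j \<notin> Ev ?k\<close> by (auto simp: Ev_def Od_def)
          then show ?thesis using e e' by (auto simp: Gs_def PE_def PiE_iff extensional_def)
        qed
      qed
    qed
  qed
  have sub: "(\<lambda>e. restrict e (Ev ?k)) ` Gs w n \<sigma> \<subseteq> Ev ?k \<rightarrow>\<^sub>E {..<n}"
  proof (rule image_subsetI)
    fix e assume "e \<in> Gs w n \<sigma>"
    then have "\<forall>x\<in>{..<?k}. e x \<in> {..<n}" by (simp add: Gs_def PE_def PiE_iff)
    then show "restrict e (Ev ?k) \<in> Ev ?k \<rightarrow>\<^sub>E {..<n}" by (auto simp: restrict_PiE_iff Ev_def)
  qed
  have "card (Gs w n \<sigma>) = card ((\<lambda>e. restrict e (Ev ?k)) ` Gs w n \<sigma>)" using inj by (simp add: card_image)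
  also have "\<dots> \<le> card (Ev ?k \<rightarrow>\<^sub>E {..<n})" by (rule card_mono[OF _ sub]) (simp add: finite_PiE)
  also have "\<dots> = n ^ card (Ev ?k)" by (simp add: card_PiE)
  finally show ?thesis .
qed

lemma G4_lower:
  assumes s: "\<sigma> \<in> Sig w"
  shows "card {v \<in> Ev (length w) \<rightarrow>\<^sub>E {..<n}. inj_on v (Ev (length w))} \<le> card (Gs w n \<sigma>)"
proof -
  let ?k = "length w"
  let ?I = "{v \<in> Ev ?k \<rightarrow>\<^sub>E {..<n}. inj_on v (Ev ?k)}"
  define ext where "ext v = (\<lambda>j. if j < ?k then (if even j then v j else v (\<sigma> j)) else undefined)" for v :: "nat \<Rightarrow> nat"
  have sev: "\<And>q. q \<in> Od ?k \<Longrightarrow> \<sigma> q \<in> Ev ?k" using Sig_props(3)[OF s] .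
  have inj: "inj_on ext ?I"
  proof (rule inj_onI)
    fix v v' assume v: "v \<in> ?I" and v': "v' \<in> ?I" and eq: "ext v = ext v'"
    show "v = v'"
    proof (rule ext)
      fix j show "v j = v' j"
      proof (cases "j \<in> Ev ?k")
        case True
        then show ?thesis using fun_cong[OF eq, of j] by (auto simp: ext_def Ev_def)
      next
        case False
        then show ?thesis using v v' by (auto simp: PiE_iff extensional_def)
      qed
    qed
  qed
  have sub: "ext ` ?I \<subseteq> Gs w n \<sigma>"
  proof (rule image_subsetI)
    fix v assume v: "v \<in> ?I"
    have vr: "v j < n" if "j \<in> Ev ?k" for j using v that by (auto simp: PiE_iff)
    have ev_of: "j \<in> Ev ?k" if "j < ?k" "even j" for j using that by (simp add: Ev_def)
    have od_of: "j \<in> Od ?k" if "j < ?k" "odd j" for j using that by (simp add: Od_def)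
    have pe: "ext v \<in> PE ?k n"
      unfolding PE_def PiE_iff
    proof (intro conjI ballI)
      fix j assume "j \<in> {..<?k}"
      then show "ext v j \<in> {..<n}" using vr ev_of od_of sev by (auto simp: ext_def)
    next
      show "ext v \<in> extensional {..<?k}" by (simp add: ext_def extensional_def)
    qed
    have c1: "\<forall>q\<in>Od ?k. ext v q = ext v (\<sigma> q)"
    proof
      fix q assume q: "q \<in> Od ?k"
      have "\<sigma> q \<in> Ev ?k" by (rule sev[OF q])
      then show "ext v q = ext v (\<sigma> q)" using q by (auto simp: ext_def Ev_def Od_def)
    qed
    have c2: "\<forall>a\<in>Ev ?k. \<forall>b\<in>Ev ?k. a \<noteq> b \<and> w ! a = w ! b \<longrightarrow> ext v a \<noteq> ext v b"
      using v by (auto simp: ext_def Ev_def inj_on_def)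
    show "ext v \<in> Gs w n \<sigma>" using pe c1 c2 by (simp add: Gs_def)
  qed
  have "card ?I = card (ext ` ?I)" using inj by (simp add: card_image)
  also have "\<dots> \<le> card (Gs w n \<sigma>)"
    by (rule card_mono[OF _ sub]) (rule finite_subset[OF _ finite_PE[of ?k n]], auto simp: Gs_def)
  finally show ?thesis .
qed

lemma card_inj_Ev: "card {v \<in> Ev k \<rightarrow>\<^sub>E {..<n}. inj_on v (Ev k)} = (\<Prod>i<card (Ev k). n - i)"
proof -
  have "card {v \<in> Ev k \<rightarrow>\<^sub>E {..<n}. inj_on v (Ev k)} = card {..<n} ^ (card (Ev k) - card (Ev k)) * prod ((-) (card {..<n})) {0..<card (Ev k)}"
    by (rule card_inj_on_subset_funcset) auto
  then show ?thesis by (simp add: atLeast0LessThan)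
qed


lemma G5:
  assumes e: "e \<in> PE (length w) n"
    and all2: "\<forall>j<length w. card (cls w e j) = 2"
    and nosp: "\<not> (\<exists>a b. a < length w \<and> b < length w \<and> a \<noteq> b \<and> keyf w e a = keyf w e b \<and> (even a \<longleftrightarrow> even b))"
  shows "\<exists>\<sigma>\<in>Sig w. e \<in> Gs w n \<sigma>"
proof -
  let ?k = "length w"
  define partner where "partner j = (THE x. x \<in> cls w e j \<and> x \<noteq> j)" for j
  have ex1: "\<exists>!x. x \<in> cls w e j \<and> x \<noteq> j" if j: "j < ?k" for j
  proof -
    obtain x y where xy: "cls w e j = {x, y}" "x \<noteq> y" using all2 j by (auto simp: card_2_iff)
    have "j \<in> cls w e j" using j by (rule mem_cls)
    then show ?thesis using xy by auto
  qed
  have pp: "partner j \<in> cls w e j \<and> partner j \<noteq> j" if j: "j < ?k" for j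
    unfolding partner_def by (rule theI'[OF ex1[OF j]])
  have puniq: "x = partner j" if j: "j < ?k" and x: "x \<in> cls w e j" "x \<noteq> j" for j x
    using ex1[OF j] pp[OF j] x by blast
  have plt: "partner j < ?k" and pkey: "keyf w e (partner j) = keyf w e j" if j: "j < ?k" for j
    using pp[OF j] by (auto simp: cls_def)
  have ppar: "even (partner j) \<longleftrightarrow> odd j" if j: "j < ?k" for j
    using nosp plt[OF j] pkey[OF j] pp[OF j] j by metis
  have pinv: "partner (partner j) = j" if j: "j < ?k" for j
  proof -
    have "j \<in> cls w e (partner j)" using j pkey[OF j] by (simp add: cls_def)
    moreover have "j \<noteq> partner j" using pp[OF j] by simp
    ultimately show ?thesis using puniq[OF plt[OF j]] by simp
  qed
  define \<sigma> where "\<sigma> = restrict partner (Od ?k)"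
  have sig: "\<sigma> \<in> Sig w"
  proof -
    have pi: "\<sigma> \<in> Od ?k \<rightarrow>\<^sub>E Ev ?k"
      unfolding \<sigma>_def restrict_PiE_iff using plt ppar by (auto simp: Od_def Ev_def)
    have inj: "inj_on \<sigma> (Od ?k)"
    proof (rule inj_onI)
      fix x y assume x: "x \<in> Od ?k" and y: "y \<in> Od ?k" and eq: "\<sigma> x = \<sigma> y"
      then have "partner x = partner y" by (simp add: \<sigma>_def)
      then show "x = y" using pinv x y by (metis Od_def mem_Collect_eq)
    qed
    have im: "\<sigma> ` Od ?k = Ev ?k"
    proof (intro equalityI subsetI)
      fix x assume "x \<in> \<sigma> ` Od ?k"
      then show "x \<in> Ev ?k" using pi by auto
    next
      fix a assume a: "a \<in> Ev ?k"
      then have ak: "a < ?k" and ea: "even a" by (auto simp: Ev_def)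
      have "partner a \<in> Od ?k" using plt[OF ak] ppar[OF ak] ea by (simp add: Od_def)
      moreover have "\<sigma> (partner a) = a" using calculation pinv[OF ak] by (simp add: \<sigma>_def)
      ultimately show "a \<in> \<sigma> ` Od ?k" by (metis image_eqI)
    qed
    have lab: "\<forall>q\<in>Od ?k. w ! (\<sigma> q) = w ! q"
      using pkey by (auto simp: \<sigma>_def Od_def keyf_def)
    show ?thesis using pi inj im lab by (simp add: Sig_def bijS_def bij_betw_def)
  qed
  have "e \<in> Gs w n \<sigma>"
  proof -
    have c1: "\<forall>q\<in>Od ?k. e q = e (\<sigma> q)"
      using pkey by (auto simp: \<sigma>_def Od_def keyf_def)
    have c2: "\<forall>a\<in>Ev ?k. \<forall>b\<in>Ev ?k. a \<noteq> b \<and> w ! a = w ! b \<longrightarrow> e a \<noteq> e b"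
      using nosp by (auto simp: Ev_def keyf_def)
    show ?thesis using e c1 c2 by (simp add: Gs_def)
  qed
  then show ?thesis using sig by blast
qed

definition En :: "nat \<Rightarrow> nat \<Rightarrow> (nat \<Rightarrow> nat) set" where
  "En k n = {e \<in> PE k n. int n dvd altsum k e}"

lemma finite_Sig: "finite (Sig w)"
  by (simp add: Sig_def bijS_finite)

lemma comb_main:
  fixes \<mu> :: "(nat \<Rightarrow> nat) \<Rightarrow> real"
  assumes ev: "even (length w)" and n: "n \<ge> 1"
    and h1: "\<And>e. e \<in> PE (length w) n \<Longrightarrow> \<bar>\<mu> e\<bar> \<le> B"
    and h2: "\<And>e. e \<in> PE (length w) n \<Longrightarrow> \<not> NS w e \<Longrightarrow> \<mu> e = 0"
    and h3: "\<And>e. e \<in> PE (length w) n \<Longrightarrow> (\<forall>j<length w. card (cls w e j) = 2) \<Longrightarrow> \<mu> e = 1"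
  shows "\<bar>(\<Sum>e\<in>En (length w) n. \<mu> e) - real (\<Sum>\<sigma>\<in>Sig w. card (Gs w n \<sigma>))\<bar>
     \<le> B * real (length w ^ length w + length w ^ length w * length w * 2) * real n ^ (length w div 2 - 1)"
proof -
  let ?k = "length w"
  let ?G = "\<Union>\<sigma>\<in>Sig w. Gs w n \<sigma>"
  let ?d = "?k div 2 - 1"
  have B0: "B \<ge> 0"
  proof -
    have "restrict (\<lambda>_. 0) {..<?k} \<in> PE ?k n"
      using n unfolding PE_def restrict_PiE_iff by auto
    then show ?thesis using h1 by fastforce
  qed
  have GPE: "Gs w n \<sigma> \<subseteq> PE ?k n" for \<sigma> by (auto simp: Gs_def)
  have GE: "?G \<subseteq> En ?k n"
    using G1 by (auto simp: En_def Gs_def)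
  have finEn: "finite (En ?k n)" by (auto simp: En_def)
  have sumG: "(\<Sum>e\<in>?G. \<mu> e) = real (\<Sum>\<sigma>\<in>Sig w. card (Gs w n \<sigma>))"
  proof -
    have "(\<Sum>e\<in>?G. \<mu> e) = (\<Sum>e\<in>?G. 1)"
    proof (intro sum.cong refl)
      fix e assume "e \<in> ?G"
      then obtain \<sigma> where s: "\<sigma> \<in> Sig w" and e: "e \<in> Gs w n \<sigma>" by auto
      show "\<mu> e = 1" using h3[OF subsetD[OF GPE e]] G2[OF s e] by blast
    qed
    also have "\<dots> = real (card ?G)" by simp
    also have "card ?G = (\<Sum>\<sigma>\<in>Sig w. card (Gs w n \<sigma>))"
    proof (rule card_UN_disjoint)
      show "finite (Sig w)" by (rule finite_Sig)
      show "\<forall>\<sigma>\<in>Sig w. finite (Gs w n \<sigma>)" using GPE finite_PE by (meson finite_subset)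
      show "\<forall>\<sigma>\<in>Sig w. \<forall>\<sigma>'\<in>Sig w. \<sigma> \<noteq> \<sigma>' \<longrightarrow> Gs w n \<sigma> \<inter> Gs w n \<sigma>' = {}"
        using G3 by blast
    qed
    finally show ?thesis .
  qed
  define Bad1 where "Bad1 = {e \<in> PE ?k n. NS w e \<and> 2 * card (Rs w e) < ?k}"
  have cB1: "card Bad1 \<le> ?k ^ ?k * n ^ ?d"
    unfolding Bad1_def by (rule count_gen[OF _ n]) (use ev in auto)
  have cB2: "card (B2 w n) \<le> ?k ^ ?k * ?k * (2 * n ^ ?d)" by (rule card_B2[OF n])
  have badsub: "{e \<in> En ?k n - ?G. NS w e} \<subseteq> Bad1 \<union> B2 w n"
  proof
    fix e assume "e \<in> {e \<in> En ?k n - ?G. NS w e}"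
    then have e: "e \<in> PE ?k n" "int n dvd altsum ?k e" "e \<notin> ?G" "NS w e" by (auto simp: En_def)
    show "e \<in> Bad1 \<union> B2 w n"
    proof (cases "2 * card (Rs w e) < ?k")
      case True then show ?thesis using e by (simp add: Bad1_def)
    next
      case False
      then have eq: "2 * card (Rs w e) = ?k" using NS_Rs[OF e(4)] by simp
      have all2: "\<forall>j<?k. card (cls w e j) = 2" using NS_Rs_eq[OF e(4) eq] by blast
      have "\<exists>a b. a < ?k \<and> b < ?k \<and> a \<noteq> b \<and> keyf w e a = keyf w e b \<and> (even a \<longleftrightarrow> even b)"
        using G5[OF e(1) all2] e(3) by blast
      then show ?thesis using e all2 by (simp add: B2_def)
    qed
  qed
  have finB: "finite (Bad1 \<union> B2 w n)" by (auto simp: Bad1_def B2_def)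
  have "(\<Sum>e\<in>En ?k n. \<mu> e) = (\<Sum>e\<in>?G. \<mu> e) + (\<Sum>e\<in>En ?k n - ?G. \<mu> e)"
    using sum.subset_diff[OF GE finEn, of \<mu>] by simp
  then have "\<bar>(\<Sum>e\<in>En ?k n. \<mu> e) - real (\<Sum>\<sigma>\<in>Sig w. card (Gs w n \<sigma>))\<bar> = \<bar>\<Sum>e\<in>En ?k n - ?G. \<mu> e\<bar>"
    using sumG by simp
  also have "\<dots> \<le> (\<Sum>e\<in>En ?k n - ?G. \<bar>\<mu> e\<bar>)" by (rule sum_abs)
  also have "\<dots> \<le> (\<Sum>e\<in>En ?k n - ?G. if NS w e then B else 0)"
    using h1 h2 by (intro sum_mono) (auto simp: En_def)
  also have "\<dots> = B * real (card {e \<in> En ?k n - ?G. NS w e})"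
    using finEn by (simp add: sum.If_cases Int_def)
  also have "\<dots> \<le> B * real (card (Bad1 \<union> B2 w n))"
    using B0 card_mono[OF finB badsub] by (intro mult_left_mono) auto
  also have "\<dots> \<le> B * real (card Bad1 + card (B2 w n))"
    using B0 card_Un_le[of Bad1 "B2 w n"] by (intro mult_left_mono) auto
  also have "\<dots> \<le> B * real (?k ^ ?k * n ^ ?d + ?k ^ ?k * ?k * (2 * n ^ ?d))"
    using mult_left_mono[OF of_nat_mono[OF add_mono[OF cB1 cB2]] B0] by simp
  also have "\<dots> = B * real (?k ^ ?k + ?k ^ ?k * ?k * 2) * real n ^ ?d"
    by (simp add: algebra_simps)
  finally show ?thesis .
qed


definition Emap :: "nat \<Rightarrow> nat \<Rightarrow> (nat \<Rightarrow> nat) \<Rightarrow> nat \<Rightarrow> nat" where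
  "Emap k n r = restrict (\<lambda>j. (r j + r (Suc j mod k)) mod n) {..<k}"

lemma nat_mod_eq_dvd: "((a::nat) mod n = b mod n) \<longleftrightarrow> int n dvd (int a - int b)"
proof -
  have "((a::nat) mod n = b mod n) \<longleftrightarrow> (int a mod int n = int b mod int n)"
    by (metis of_nat_eq_iff of_nat_mod)
  also have "\<dots> \<longleftrightarrow> int n dvd (int a - int b)" by (rule mod_eq_dvd_iff)
  finally show ?thesis .
qed

lemma dvd_mod_diff: "int n dvd (int (a mod n) - int a)"
  using nat_mod_eq_dvd[of "a mod n" n a] by simp

lemma PE_mem: "r \<in> PE k n \<Longrightarrow> j < k \<Longrightarrow> r j < n"
  by (auto simp: PE_def PiE_iff)

lemma PE_ext:
  assumes "r \<in> PE k n" "r' \<in> PE k n" "\<And>j. j < k \<Longrightarrow> r j = r' j"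
  shows "r = r'"
proof (rule ext)
  fix x show "r x = r' x"
  proof (cases "x < k")
    case True then show ?thesis using assms(3) by simp
  next
    case False
    have "r \<in> extensional {..<k}" "r' \<in> extensional {..<k}" using assms(1,2) by (simp_all add: PE_def PiE_iff)
    then show ?thesis using False by (simp add: extensional_def)
  qed
qed

lemma E1: "n \<ge> 1 \<Longrightarrow> Emap k n r \<in> PE k n"
  unfolding Emap_def PE_def restrict_PiE_iff by auto

lemma E2:
  assumes k: "k \<ge> 1"
  shows "inj_on (\<lambda>r. (r 0, Emap k n r)) (PE k n)"
proof (rule inj_onI)
  fix r r' assume r: "r \<in> PE k n" and r': "r' \<in> PE k n" and eq: "(r 0, Emap k n r) = (r' 0, Emap k n r')"
  have all: "j < k \<Longrightarrow> r j = r' j" for j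
  proof (induction j)
    case 0 then show ?case using eq by simp
  next
    case (Suc j)
    then have jk: "j < k" by simp
    have "(r j + r (Suc j)) mod n = (r' j + r' (Suc j)) mod n"
      using fun_cong[OF arg_cong[OF eq, of snd], of j] jk Suc.prems by (simp add: Emap_def)
    then have "int n dvd (int (r j + r (Suc j)) - int (r' j + r' (Suc j)))" by (simp add: nat_mod_eq_dvd)
    then have "int n dvd (int (r (Suc j)) - int (r' (Suc j)))" using Suc.IH[OF jk] by simp
    then have "r (Suc j) mod n = r' (Suc j) mod n" by (simp add: nat_mod_eq_dvd)
    then show ?case using PE_mem[OF r Suc.prems] PE_mem[OF r' Suc.prems] by simp
  qed
  show "r = r'" by (rule PE_ext[OF r r' all])
qed

lemma altsum_shift_zero:
  assumes "even k" "k \<ge> 1"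
  shows "(\<Sum>j<k. (-1) ^ j * (int (r j) + int (r (Suc j mod k)))) = 0"
proof -
  obtain k' where k': "k = Suc k'" using assms(2) by (cases k) auto
  have ok: "odd k'" using assms(1) k' by simp
  have S2: "(\<Sum>j<k. (-1) ^ j * int (r (Suc j mod k))) = (\<Sum>j<k'. (-1) ^ j * int (r (Suc j))) + (-1) ^ k' * int (r 0)"
    unfolding k' by (simp add: sum.lessThan_Suc)
  have S1: "(\<Sum>j<k. (-1) ^ j * int (r j)) = int (r 0) + (\<Sum>j<k'. (-1) ^ Suc j * int (r (Suc j)))"
    unfolding k' by (subst sum.lessThan_Suc_shift) simp
  have "(\<Sum>j<k. (-1) ^ j * (int (r j) + int (r (Suc j mod k)))) =
        (\<Sum>j<k. (-1) ^ j * int (r j)) + (\<Sum>j<k. (-1) ^ j * int (r (Suc j mod k)))"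
    by (simp add: algebra_simps sum.distrib)
  also have "\<dots> = 0" unfolding S1 S2 using ok
    by (simp add: sum.distrib[symmetric] algebra_simps)
  finally show ?thesis .
qed

lemma E3:
  assumes "even k" "k \<ge> 1"
  shows "int n dvd altsum k (Emap k n r)"
proof -
  have "altsum k (Emap k n r) = altsum k (Emap k n r) - (\<Sum>j<k. (-1) ^ j * (int (r j) + int (r (Suc j mod k))))"
    using altsum_shift_zero[OF assms] by simp
  also have "\<dots> = (\<Sum>j<k. (-1) ^ j * (int ((r j + r (Suc j mod k)) mod n) - int (r j + r (Suc j mod k))))"
  proof -
    have a: "altsum k (Emap k n r) = (\<Sum>j<k. (-1) ^ j * int ((r j + r (Suc j mod k)) mod n))"
      unfolding altsum_def by (intro sum.cong refl) (simp add: Emap_def)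
    show ?thesis unfolding a sum_subtractf[symmetric]
      by (intro sum.cong refl) (simp add: right_diff_distrib)
  qed
  finally have eq: "altsum k (Emap k n r) = \<dots>" .
  show ?thesis unfolding eq
    by (intro dvd_sum dvd_mult dvd_mod_diff)
qed

fun rrec :: "nat \<Rightarrow> (nat \<Rightarrow> nat) \<Rightarrow> nat \<Rightarrow> nat \<Rightarrow> nat" where
  "rrec n e x 0 = x"
| "rrec n e x (Suc j) = (e j + n - rrec n e x j) mod n"

lemma rrec_lt: "x < n \<Longrightarrow> rrec n e x j < n"
  by (cases j) auto

lemma rrec_step:
  assumes "x < n" "e j < n"
  shows "(rrec n e x j + rrec n e x (Suc j)) mod n = e j"
proof -
  have lt: "rrec n e x j < n" by (rule rrec_lt[OF assms(1)])
  have "(rrec n e x j + rrec n e x (Suc j)) mod n = (rrec n e x j + (e j + n - rrec n e x j)) mod n"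
    by (simp add: mod_add_right_eq)
  also have "rrec n e x j + (e j + n - rrec n e x j) = e j + n" using lt by simp
  finally show ?thesis using assms(2) by simp
qed

lemma rrec_inv:
  assumes "x < n"
  shows "int n dvd ((-1) ^ j * int (rrec n e x j) - (int x - (\<Sum>i<j. (-1) ^ i * int (e i))))"
proof (induction j)
  case 0 then show ?case by simp
next
  case (Suc j)
  have lt: "rrec n e x j < n" by (rule rrec_lt[OF assms])
  have d1: "int n dvd (int (rrec n e x (Suc j)) - (int (e j) - int (rrec n e x j)))"
  proof -
    have h: "int n dvd (int ((e j + n - rrec n e x j) mod n) - int (e j + n - rrec n e x j))"
      by (rule dvd_mod_diff)
    have "int (e j + n - rrec n e x j) = (int (e j) - int (rrec n e x j)) + int n"
      using lt by simp
    then have eq: "int (rrec n e x (Suc j)) - (int (e j) - int (rrec n e x j))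
       = (int ((e j + n - rrec n e x j) mod n) - int (e j + n - rrec n e x j)) + int n"
      by simp
    show ?thesis unfolding eq by (rule dvd_add[OF h dvd_refl])
  qed
  then have d2: "int n dvd ((-1) ^ Suc j * int (rrec n e x (Suc j)) - (-1) ^ Suc j * (int (e j) - int (rrec n e x j)))"
    by (metis dvd_mult right_diff_distrib)
  have eq: "(-1) ^ Suc j * int (rrec n e x (Suc j)) - (int x - (\<Sum>i<Suc j. (-1) ^ i * int (e i)))
      = ((-1) ^ Suc j * int (rrec n e x (Suc j)) - (-1) ^ Suc j * (int (e j) - int (rrec n e x j)))
        + ((-1) ^ j * int (rrec n e x j) - (int x - (\<Sum>i<j. (-1) ^ i * int (e i))))"
    by (simp add: algebra_simps)
  show ?case unfolding eq by (rule dvd_add[OF d2 Suc.IH])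
qed

lemma E4:
  assumes ev: "even k" and k: "k \<ge> 1" and e: "e \<in> En k n" and x: "x < n"
  shows "\<exists>r\<in>PE k n. r 0 = x \<and> Emap k n r = e"
proof -
  obtain k' where k': "k = Suc k'" using k by (cases k) auto
  have ok: "odd k'" using ev k' by simp
  have ePE: "e \<in> PE k n" and ed: "int n dvd altsum k e" using e by (auto simp: En_def)
  define r where "r = restrict (rrec n e x) {..<k}"
  have rPE: "r \<in> PE k n" using rrec_lt[OF x] by (simp add: r_def PE_def)
  have r0: "r 0 = x" using k by (simp add: r_def)
  have last: "(rrec n e x k' + x) mod n = e k'"
  proof -
    have inv: "int n dvd (- int (rrec n e x k') - (int x - (\<Sum>i<k'. (-1) ^ i * int (e i))))"
      using rrec_inv[OF x, of k' e] ok by simp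
    have "altsum k e = (\<Sum>i<k'. (-1) ^ i * int (e i)) - int (e k')"
      using ok by (simp add: altsum_def k')
    then have "int n dvd ((\<Sum>i<k'. (-1) ^ i * int (e i)) - int (e k'))" using ed by simp
    then have "int n dvd ((\<Sum>i<k'. (-1) ^ i * int (e i)) - int (e k') - (- int (rrec n e x k') - (int x - (\<Sum>i<k'. (-1) ^ i * int (e i)))))"
      using inv by (rule dvd_diff)
    then have "int n dvd (int (rrec n e x k' + x) - int (e k'))"
      by (simp add: algebra_simps)
    then have "(rrec n e x k' + x) mod n = e k' mod n" by (simp add: nat_mod_eq_dvd)
    then show ?thesis using PE_mem[OF ePE, of k'] k' by simp
  qed
  have "Emap k n r = e"
  proof (rule PE_ext[OF E1 ePE])
    show "n \<ge> 1" using x by simp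
  next
    fix j assume j: "j < k"
    show "Emap k n r j = e j"
    proof (cases "Suc j < k")
      case True
      then show ?thesis using j rrec_step[where e=e, OF x PE_mem[OF ePE j]] by (simp add: Emap_def r_def)
    next
      case False
      then have "j = k'" using j k' by simp
      then show ?thesis using last k' k by (simp add: Emap_def r_def)
    qed
  qed
  then show ?thesis using rPE r0 by blast
qed

lemma sum_Emap:
  fixes f :: "(nat \<Rightarrow> nat) \<Rightarrow> real"
  assumes ev: "even k" and k: "k \<ge> 1" and n: "n \<ge> 1"
  shows "(\<Sum>r\<in>PE k n. f (Emap k n r)) = real n * (\<Sum>e\<in>En k n. f e)"
proof -
  have bij: "bij_betw (\<lambda>r. (r 0, Emap k n r)) (PE k n) ({..<n} \<times> En k n)"
  proof (rule bij_betw_imageI)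
    show "inj_on (\<lambda>r. (r 0, Emap k n r)) (PE k n)" by (rule E2[OF k])
    show "(\<lambda>r. (r 0, Emap k n r)) ` PE k n = {..<n} \<times> En k n"
    proof (intro equalityI subsetI)
      fix y assume "y \<in> (\<lambda>r. (r 0, Emap k n r)) ` PE k n"
      then obtain r where r: "r \<in> PE k n" "y = (r 0, Emap k n r)" by auto
      have "r 0 < n" using PE_mem[OF r(1)] k by simp
      moreover have "Emap k n r \<in> En k n" using E1[OF n] E3[OF ev k] by (simp add: En_def)
      ultimately show "y \<in> {..<n} \<times> En k n" using r by simp
    next
      fix y assume "y \<in> {..<n} \<times> En k n"
      then obtain x e where y: "y = (x, e)" "x < n" "e \<in> En k n" by auto
      obtain r where "r \<in> PE k n" "r 0 = x" "Emap k n r = e" using E4[OF ev k y(3) y(2)] by blast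
      then show "y \<in> (\<lambda>r. (r 0, Emap k n r)) ` PE k n" using y by force
    qed
  qed
  have "(\<Sum>r\<in>PE k n. f (Emap k n r)) = (\<Sum>r\<in>PE k n. (\<lambda>(x, e). f e) (r 0, Emap k n r))" by simp
  also have "\<dots> = (\<Sum>y\<in>{..<n} \<times> En k n. (\<lambda>(x, e). f e) y)"
    by (rule sum.reindex_bij_betw[OF bij])
  also have "\<dots> = (\<Sum>x<n. \<Sum>e\<in>En k n. f e)"
    by (simp add: sum.cartesian_product[symmetric])
  also have "\<dots> = real n * (\<Sum>e\<in>En k n. f e)" by simp
  finally show ?thesis .
qed

lemma card_Emap:
  assumes k: "k \<ge> 1" and n: "n \<ge> 1"
  shows "card {r \<in> PE k n. P (Emap k n r)} \<le> n * card {e \<in> PE k n. P e}"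
proof -
  have inj: "inj_on (\<lambda>r. (r 0, Emap k n r)) {r \<in> PE k n. P (Emap k n r)}"
    using E2[OF k] by (rule inj_on_subset) auto
  have sub: "(\<lambda>r. (r 0, Emap k n r)) ` {r \<in> PE k n. P (Emap k n r)} \<subseteq> {..<n} \<times> {e \<in> PE k n. P e}"
  proof (rule image_subsetI)
    fix r assume r: "r \<in> {r \<in> PE k n. P (Emap k n r)}"
    have "r 0 < n" using PE_mem[of r k n 0] r k by simp
    then show "(r 0, Emap k n r) \<in> {..<n} \<times> {e \<in> PE k n. P e}" using r E1[OF n] by simp
  qed
  have "card {r \<in> PE k n. P (Emap k n r)} = card ((\<lambda>r. (r 0, Emap k n r)) ` {r \<in> PE k n. P (Emap k n r)})"
    using inj by (simp add: card_image)
  also have "\<dots> \<le> card ({..<n} \<times> {e \<in> PE k n. P e})"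
    by (rule card_mono[OF _ sub]) simp
  also have "\<dots> = n * card {e \<in> PE k n. P e}" by (simp add: card_cartesian_product)
  finally show ?thesis .
qed


lemma PE_out: "r \<in> PE k n \<Longrightarrow> \<not> j < k \<Longrightarrow> r j = undefined"
  by (auto simp: PE_def PiE_iff extensional_def)

lemma PE_I: "(\<And>j. j < k \<Longrightarrow> r j < n) \<Longrightarrow> (\<And>j. \<not> j < k \<Longrightarrow> r j = undefined) \<Longrightarrow> r \<in> PE k n"
  unfolding PE_def PiE_iff extensional_def by auto

lemma PE_Suc_bij:
  fixes g :: "(nat \<Rightarrow> nat) \<Rightarrow> complex"
  shows "(\<Sum>R\<in>PE (Suc k) n. g R) = (\<Sum>x<n. \<Sum>r\<in>PE k n. g (\<lambda>j. if j = 0 then x else if j < Suc k then r (j - 1) else undefined))"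
proof -
  let ?j = "\<lambda>(x, r). (\<lambda>j. if j = 0 then x else if j < Suc k then r (j - 1) else undefined) :: nat \<Rightarrow> nat"
  let ?i = "\<lambda>R :: nat \<Rightarrow> nat. (R 0, \<lambda>j. if j < k then R (Suc j) else undefined)"
  have ji: "?j (?i R) = R" if R: "R \<in> PE (Suc k) n" for R
  proof (rule ext)
    fix j show "?j (?i R) j = R j"
      using R by (cases j) (auto simp: PE_def PiE_iff extensional_def)
  qed
  have "(\<Sum>R\<in>PE (Suc k) n. g R) = (\<Sum>p\<in>{..<n} \<times> PE k n. g (?j p))"
  proof (rule sum.reindex_bij_witness[where i = ?j and j = ?i and h = "\<lambda>p. g (?j p)"])
    fix R assume R: "R \<in> PE (Suc k) n"
    show "?j (?i R) = R" by (rule ji[OF R])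
    show "?i R \<in> {..<n} \<times> PE k n"
      using R by (auto simp: PE_def PiE_iff extensional_def)
    show "g (?j (?i R)) = g R" using ji[OF R] by simp
  next
    fix p assume p: "p \<in> {..<n} \<times> PE k n"
    obtain x r where xr: "p = (x, r)" by (cases p)
    have r: "r \<in> PE k n" and x: "x < n" using p xr by auto
    show "?i (?j p) = p"
    proof -
      have "(\<lambda>j. if j < k then ?j p (Suc j) else undefined) = r"
      proof (rule ext)
        fix j show "(if j < k then ?j p (Suc j) else undefined) = r j"
          using r xr by (auto simp: PE_def PiE_iff extensional_def)
      qed
      then show ?thesis using xr by simp
    qed
    show "?j p \<in> PE (Suc k) n"
      using r x xr by (auto simp: PE_def PiE_iff extensional_def less_Suc_eq_0_disj)
  qed
  also have "\<dots> = (\<Sum>(x, r)\<in>{..<n} \<times> PE k n. g (?j (x, r)))"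
    by (intro sum.cong refl) (auto split: prod.split)
  also have "\<dots> = (\<Sum>x<n. \<Sum>r\<in>PE k n. g (?j (x, r)))"
    by (rule sum.cartesian_product[symmetric])
  finally show ?thesis by simp
qed

lemma wp_path:
  assumes "a < n" "b < n"
  shows "word_prod n A w \<omega> a b = (\<Sum>r\<in>PE (Suc (length w)) n.
     (if r 0 = a \<and> r (length w) = b then (\<Prod>j<length w. A (w ! j) \<omega> (r j) (r (Suc j))) else 0))"
  using assms(1)
proof (induction w arbitrary: a)
  case Nil
  have "(\<Sum>r\<in>PE (Suc 0) n. (if r 0 = a \<and> r 0 = b then (1::complex) else 0))
      = (\<Sum>x<n. \<Sum>r\<in>PE 0 n. (if x = a \<and> x = b then 1 else 0))"
    by (subst PE_Suc_bij) simp
  also have "\<dots> = (\<Sum>x<n. (if x = a then (if a = b then 1 else 0) else 0))"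
    by (intro sum.cong refl) (auto simp: card_PE)
  also have "\<dots> = (if a = b then 1 else 0)"
    using Nil.prems by (simp add: sum.delta)
  finally have calc: "(\<Sum>r\<in>PE (Suc 0) n. (if r 0 = a \<and> r 0 = b then (1::complex) else 0)) = (if a = b then 1 else 0)" .
  have e: "(\<Prod>j<0. A ([] ! j) \<omega> (r j) (r (Suc j))) = 1" for r by simp
  show ?case unfolding e word_prod.simps list.size(3) by (simp only: mat_id_def calc)
next
  case (Cons i w)
  let ?k = "length w"
  let ?P = "\<lambda>r. (\<Prod>j<?k. A (w ! j) \<omega> (r j) (r (Suc j)))"
  have "word_prod n A (i # w) \<omega> a b = (\<Sum>t<n. A i \<omega> a t * word_prod n A w \<omega> t b)"
    by (simp add: mat_mult_def)
  also have "\<dots> = (\<Sum>t<n. \<Sum>r\<in>PE (Suc ?k) n. A i \<omega> a t * (if r 0 = t \<and> r ?k = b then ?P r else 0))"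
    by (simp add: Cons.IH sum_distrib_left)
  also have "\<dots> = (\<Sum>r\<in>PE (Suc ?k) n. \<Sum>t<n. A i \<omega> a t * (if r 0 = t \<and> r ?k = b then ?P r else 0))"
    by (rule sum.swap)
  also have "\<dots> = (\<Sum>r\<in>PE (Suc ?k) n. (if r ?k = b then A i \<omega> a (r 0) * ?P r else 0))"
  proof (intro sum.cong refl)
    fix r assume r: "r \<in> PE (Suc ?k) n"
    have r0: "r 0 < n" using PE_mem[OF r] by simp
    have "(\<Sum>t<n. A i \<omega> a t * (if r 0 = t \<and> r ?k = b then ?P r else 0))
        = (\<Sum>t<n. if t = r 0 then (if r ?k = b then A i \<omega> a (r 0) * ?P r else 0) else 0)"
      by (intro sum.cong refl) auto
    also have "\<dots> = (if r ?k = b then A i \<omega> a (r 0) * ?P r else 0)"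
      using r0 by (simp add: sum.delta)
    finally show "(\<Sum>t<n. A i \<omega> a t * (if r 0 = t \<and> r ?k = b then ?P r else 0)) = \<dots>" .
  qed
  also have "\<dots> = (\<Sum>x<n. \<Sum>r\<in>PE (Suc ?k) n. (if x = a then (if r ?k = b then A i \<omega> a (r 0) * ?P r else 0) else 0))"
  proof -
    have "(\<Sum>x<n. \<Sum>r\<in>PE (Suc ?k) n. (if x = a then (if r ?k = b then A i \<omega> a (r 0) * ?P r else 0) else 0))
       = (\<Sum>x<n. if x = a then (\<Sum>r\<in>PE (Suc ?k) n. (if r ?k = b then A i \<omega> a (r 0) * ?P r else 0)) else 0)"
      by (intro sum.cong refl) simp
    also have "\<dots> = (\<Sum>r\<in>PE (Suc ?k) n. (if r ?k = b then A i \<omega> a (r 0) * ?P r else 0))"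
      using Cons.prems by (simp add: sum.delta)
    finally show ?thesis by simp
  qed
  also have "\<dots> = (\<Sum>R\<in>PE (Suc (Suc ?k)) n.
      (if R 0 = a \<and> R (Suc ?k) = b then (\<Prod>j<Suc ?k. A ((i # w) ! j) \<omega> (R j) (R (Suc j))) else 0))"
  proof (subst PE_Suc_bij, intro sum.cong refl)
    fix x r assume r: "r \<in> PE (Suc ?k) n"
    let ?R = "\<lambda>j. if j = 0 then x else if j < Suc (Suc ?k) then r (j - 1) else undefined"
    have "(\<Prod>j<Suc ?k. A ((i # w) ! j) \<omega> (?R j) (?R (Suc j))) = A i \<omega> x (r 0) * ?P r"
      by (subst prod.lessThan_Suc_shift) simp
    then show "(if x = a then (if r ?k = b then A i \<omega> a (r 0) * ?P r else 0) else 0) =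
       (if ?R 0 = a \<and> ?R (Suc ?k) = b then (\<Prod>j<Suc ?k. A ((i # w) ! j) \<omega> (?R j) (?R (Suc j))) else 0)"
      by auto
  qed
  finally show ?case by (simp only: length_Cons)
qed

lemma trace_path:
  assumes k: "length w \<ge> 1"
  shows "mtrace n (word_prod n A w \<omega>) = (\<Sum>r\<in>PE (length w) n. \<Prod>j<length w. A (w ! j) \<omega> (r j) (r (Suc j mod length w)))"
proof -
  let ?k = "length w"
  let ?P = "\<lambda>r. (\<Prod>j<?k. A (w ! j) \<omega> (r j) (r (Suc j)))"
  have "mtrace n (word_prod n A w \<omega>) = (\<Sum>a<n. \<Sum>r\<in>PE (Suc ?k) n. (if r 0 = a \<and> r ?k = a then ?P r else 0))"
    by (simp add: mtrace_def wp_path)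
  also have "\<dots> = (\<Sum>r\<in>PE (Suc ?k) n. \<Sum>a<n. (if r 0 = a \<and> r ?k = a then ?P r else 0))"
    by (rule sum.swap)
  also have "\<dots> = (\<Sum>r\<in>PE (Suc ?k) n. (if r 0 = r ?k then ?P r else 0))"
  proof (intro sum.cong refl)
    fix r assume r: "r \<in> PE (Suc ?k) n"
    have "r 0 < n" using PE_mem[OF r] by simp
    have "(\<Sum>a<n. (if r 0 = a \<and> r ?k = a then ?P r else 0)) = (\<Sum>a<n. (if a = r 0 then (if r 0 = r ?k then ?P r else 0) else 0))"
      by (intro sum.cong refl) auto
    then show "(\<Sum>a<n. (if r 0 = a \<and> r ?k = a then ?P r else 0)) = (if r 0 = r ?k then ?P r else 0)"
      using \<open>r 0 < n\<close> by (simp add: sum.delta)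
  qed
  also have "\<dots> = (\<Sum>r\<in>{r \<in> PE (Suc ?k) n. r 0 = r ?k}. ?P r)"
    by (simp add: sum.inter_filter)
  also have "\<dots> = (\<Sum>r\<in>PE ?k n. \<Prod>j<?k. A (w ! j) \<omega> (r j) (r (Suc j mod ?k)))"
  proof (rule sum.reindex_bij_witness[where j = "\<lambda>r. restrict r {..<?k}" and i = "\<lambda>r. r(?k := r 0)"])
    fix r assume r: "r \<in> {r \<in> PE (Suc ?k) n. r 0 = r ?k}"
    have rP: "r \<in> PE (Suc ?k) n" and r0: "r 0 = r ?k" using r by auto
    have k0: "0 < ?k" using k by linarith
    have rk0: "restrict r {..<?k} 0 = r 0" using k0 by (intro restrict_apply') (simp only: lessThan_iff)
    show "(restrict r {..<?k})(?k := restrict r {..<?k} 0) = r"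
    proof (rule ext)
      fix j
      consider "j < ?k" | "j = ?k" | "j > ?k" by linarith
      then show "((restrict r {..<?k})(?k := restrict r {..<?k} 0)) j = r j"
      proof cases
        case 1
        then have "j \<noteq> ?k" by simp
        then have "((restrict r {..<?k})(?k := restrict r {..<?k} 0)) j = restrict r {..<?k} j"
          by (rule fun_upd_other)
        also have "\<dots> = r j" using 1 by (intro restrict_apply') (simp only: lessThan_iff)
        finally show ?thesis .
      next
        case 2
        then have "((restrict r {..<?k})(?k := restrict r {..<?k} 0)) j = restrict r {..<?k} 0"
          by (simp only: fun_upd_same)
        also have "\<dots> = r j" using rk0 r0 2 by (simp only:)
        finally show ?thesis .
      next
        case 3
        then have "j \<noteq> ?k" by simp
        then have "((restrict r {..<?k})(?k := restrict r {..<?k} 0)) j = restrict r {..<?k} j"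
          by (rule fun_upd_other)
        also have "\<dots> = undefined" using 3 by (simp add: restrict_def)
        also have "\<dots> = r j" using PE_out[OF rP, of j] 3 by simp
        finally show ?thesis .
      qed
    qed
    show "restrict r {..<?k} \<in> PE ?k n"
      unfolding PE_def restrict_PiE_iff using PE_mem[OF rP] by simp
    show "(\<Prod>j<?k. A (w ! j) \<omega> (restrict r {..<?k} j) (restrict r {..<?k} (Suc j mod ?k))) = ?P r"
    proof (rule prod.cong[OF refl])
      fix j assume j: "j \<in> {..<?k}"
      show "A (w ! j) \<omega> (restrict r {..<?k} j) (restrict r {..<?k} (Suc j mod ?k)) = A (w ! j) \<omega> (r j) (r (Suc j))"
      proof -
        have j1: "restrict r {..<?k} j = r j" using j by simp
        have j2: "restrict r {..<?k} (Suc j mod ?k) = r (Suc j)"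
        proof (cases "Suc j < ?k")
          case True
          then have "Suc j mod ?k = Suc j" by (rule mod_less)
          then show ?thesis using True by simp
        next
          case False
          then have sj: "Suc j = ?k" using j by simp
          then have "Suc j mod ?k = 0" by (simp only: mod_self)
          moreover have "restrict r {..<?k} 0 = r 0" using k0 by (intro restrict_apply') (simp only: lessThan_iff)
          moreover have "r 0 = r ?k" using r by blast
          ultimately show ?thesis by (simp only: sj)
        qed
        show ?thesis by (simp only: j1 j2)
      qed
    qed
  next
    fix r assume r: "r \<in> PE ?k n"
    show "restrict (r(?k := r 0)) {..<?k} = r"
    proof (rule ext)
      fix j show "restrict (r(?k := r 0)) {..<?k} j = r j"
        using PE_out[OF r, of j] by simp
    qed
    have "r(?k := r 0) \<in> PE (Suc ?k) n"
    proof (rule PE_I)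
      fix j assume "j < Suc ?k"
      moreover have "r 0 < n" using PE_mem[OF r, of 0] k by linarith
      ultimately show "(r(?k := r 0)) j < n" using PE_mem[OF r, of j] by (cases "j = ?k") auto
    next
      fix j assume "\<not> j < Suc ?k"
      then show "(r(?k := r 0)) j = undefined" using PE_out[OF r, of j] by simp
    qed
    then show "r(?k := r 0) \<in> {r \<in> PE (Suc ?k) n. r 0 = r ?k}" using k by simp
  qed
  finally show ?thesis .
qed


locale rcs = prob_space M for M :: "'a measure" +
  fixes X :: "nat \<Rightarrow> nat \<Rightarrow> 'a \<Rightarrow> real" and m :: nat
  assumes indep: "indep_vars (\<lambda>_. borel) (\<lambda>(i, j). X i j) ({..<m} \<times> UNIV)"
    and mean: "\<And>i j. i < m \<Longrightarrow> integrable M (X i j) \<and> (\<integral>\<omega>. X i j \<omega> \<partial>M) = 0"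
    and var: "\<And>i j. i < m \<Longrightarrow> integrable M (\<lambda>\<omega>. (X i j \<omega>)^2) \<and> (\<integral>\<omega>. (X i j \<omega>)^2 \<partial>M) = 1"
    and moments: "\<And>i k. i < m \<Longrightarrow> k \<ge> 3 \<Longrightarrow>
        \<exists>B. \<forall>j. integrable M (\<lambda>\<omega>. \<bar>X i j \<omega>\<bar> ^ k) \<and> (\<integral>\<omega>. \<bar>X i j \<omega>\<bar> ^ k \<partial>M) \<le> B"
begin

lemma Xmeas[measurable]: "i < m \<Longrightarrow> X i j \<in> borel_measurable M"
  using indep unfolding indep_vars_def by auto

lemma pow_le: "\<bar>x::real\<bar> ^ c \<le> 1 + \<bar>x\<bar> ^ (c + 3)"
proof (cases "\<bar>x\<bar> \<le> 1")
  case True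
  then have "\<bar>x\<bar> ^ c \<le> 1" by (simp add: power_le_one)
  then show ?thesis by (simp add: add_increasing2)
next
  case False
  then have "\<bar>x\<bar> ^ c \<le> \<bar>x\<bar> ^ (c + 3)" by (intro power_increasing) auto
  then show ?thesis by simp
qed

lemma absmom1: "i < m \<Longrightarrow> \<exists>B. \<forall>j. integrable M (\<lambda>\<omega>. \<bar>X i j \<omega>\<bar> ^ c) \<and> (\<integral>\<omega>. \<bar>X i j \<omega>\<bar> ^ c \<partial>M) \<le> B"
proof -
  assume i: "i < m"
  obtain B where B: "\<forall>j. integrable M (\<lambda>\<omega>. \<bar>X i j \<omega>\<bar> ^ (c + 3)) \<and> (\<integral>\<omega>. \<bar>X i j \<omega>\<bar> ^ (c + 3) \<partial>M) \<le> B"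
    using moments[OF i, of "c + 3"] by auto
  have "integrable M (\<lambda>\<omega>. \<bar>X i j \<omega>\<bar> ^ c) \<and> (\<integral>\<omega>. \<bar>X i j \<omega>\<bar> ^ c \<partial>M) \<le> 1 + B" for j
  proof
    have i3: "integrable M (\<lambda>\<omega>. 1 + \<bar>X i j \<omega>\<bar> ^ (c + 3))" using B by auto
    show ic: "integrable M (\<lambda>\<omega>. \<bar>X i j \<omega>\<bar> ^ c)"
    proof (rule Bochner_Integration.integrable_bound[OF i3])
      show "(\<lambda>\<omega>. \<bar>X i j \<omega>\<bar> ^ c) \<in> borel_measurable M" using Xmeas[OF i] by measurable
      show "AE x in M. norm (\<bar>X i j x\<bar> ^ c) \<le> norm (1 + \<bar>X i j x\<bar> ^ (c + 3))"
        using pow_le by (auto intro!: AE_I2)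
    qed
    have "(\<integral>\<omega>. \<bar>X i j \<omega>\<bar> ^ c \<partial>M) \<le> (\<integral>\<omega>. 1 + \<bar>X i j \<omega>\<bar> ^ (c + 3) \<partial>M)"
      by (rule integral_mono[OF ic i3]) (rule pow_le)
    also have "\<dots> = 1 + (\<integral>\<omega>. \<bar>X i j \<omega>\<bar> ^ (c + 3) \<partial>M)"
      using B by (simp add: prob_space)
    also have "\<dots> \<le> 1 + B" using B by simp
    finally show "(\<integral>\<omega>. \<bar>X i j \<omega>\<bar> ^ c \<partial>M) \<le> 1 + B" .
  qed
  then show ?thesis by blast
qed

lemma absmom: "\<exists>B. \<forall>i<m. \<forall>j. integrable M (\<lambda>\<omega>. \<bar>X i j \<omega>\<bar> ^ c) \<and> (\<integral>\<omega>. \<bar>X i j \<omega>\<bar> ^ c \<partial>M) \<le> B"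
proof -
  have "\<forall>i\<in>{..<m}. \<exists>B. \<forall>j. integrable M (\<lambda>\<omega>. \<bar>X i j \<omega>\<bar> ^ c) \<and> (\<integral>\<omega>. \<bar>X i j \<omega>\<bar> ^ c \<partial>M) \<le> B"
    using absmom1 by auto
  then obtain Bf where Bf: "\<forall>i\<in>{..<m}. \<forall>j. integrable M (\<lambda>\<omega>. \<bar>X i j \<omega>\<bar> ^ c) \<and> (\<integral>\<omega>. \<bar>X i j \<omega>\<bar> ^ c \<partial>M) \<le> Bf i"
    by metis
  have "Bf i \<le> (\<Sum>i'<m. \<bar>Bf i'\<bar>)" if "i < m" for i
  proof -
    have "Bf i \<le> \<bar>Bf i\<bar>" by simp
    also have "\<dots> \<le> (\<Sum>i'<m. \<bar>Bf i'\<bar>)" using that by (intro member_le_sum) auto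
    finally show ?thesis .
  qed
  then show ?thesis using Bf by (meson lessThan_iff order_trans)
qed

lemma int_pow: "i < m \<Longrightarrow> integrable M (\<lambda>\<omega>. X i j \<omega> ^ c)"
proof -
  assume i: "i < m"
  obtain B where "\<forall>i<m. \<forall>j. integrable M (\<lambda>\<omega>. \<bar>X i j \<omega>\<bar> ^ c) \<and> (\<integral>\<omega>. \<bar>X i j \<omega>\<bar> ^ c \<partial>M) \<le> B"
    using absmom by blast
  then have "integrable M (\<lambda>\<omega>. \<bar>X i j \<omega> ^ c\<bar>)" using i by (simp add: power_abs)
  then show ?thesis using integrable_abs_iff[of "\<lambda>\<omega>. X i j \<omega> ^ c" M] Xmeas[OF i] by simp
qed

definition gk :: "nat list \<Rightarrow> (nat \<Rightarrow> nat) \<Rightarrow> nat \<Rightarrow> nat \<times> nat" where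
  "gk w e l = (w ! l, Suc (e l))"
definition Sg :: "nat list \<Rightarrow> (nat \<Rightarrow> nat) \<Rightarrow> (nat \<times> nat) set" where
  "Sg w e = gk w e ` {..<length w}"
definition cnte :: "nat list \<Rightarrow> (nat \<Rightarrow> nat) \<Rightarrow> nat \<times> nat \<Rightarrow> nat" where
  "cnte w e s = card {l. l < length w \<and> gk w e l = s}"
definition mu :: "nat list \<Rightarrow> (nat \<Rightarrow> nat) \<Rightarrow> real" where
  "mu w e = (\<integral>\<omega>. (\<Prod>l<length w. X (w ! l) (Suc (e l)) \<omega>) \<partial>M)"

lemma group_prod: "(\<Prod>l<length w. X (w ! l) (Suc (e l)) \<omega>) = (\<Prod>s\<in>Sg w e. X (fst s) (snd s) \<omega> ^ cnte w e s)"
proof -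
  have "(\<Prod>l<length w. X (w ! l) (Suc (e l)) \<omega>) =
     (\<Prod>s\<in>gk w e ` {..<length w}. \<Prod>l\<in>{l. l \<in> {..<length w} \<and> gk w e l = s}. X (w ! l) (Suc (e l)) \<omega>)"
    by (rule prod.image_gen) simp
  also have "\<dots> = (\<Prod>s\<in>Sg w e. X (fst s) (snd s) \<omega> ^ cnte w e s)"
    unfolding Sg_def
  proof (intro prod.cong refl)
    fix s assume "s \<in> gk w e ` {..<length w}"
    have "(\<Prod>l\<in>{l. l \<in> {..<length w} \<and> gk w e l = s}. X (w ! l) (Suc (e l)) \<omega>)
        = (\<Prod>l\<in>{l. l \<in> {..<length w} \<and> gk w e l = s}. X (fst s) (snd s) \<omega>)"
      by (intro prod.cong refl) (auto simp: gk_def)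
    also have "\<dots> = X (fst s) (snd s) \<omega> ^ cnte w e s" by (simp add: cnte_def)
    finally show "(\<Prod>l\<in>{l. l \<in> {..<length w} \<and> gk w e l = s}. X (w ! l) (Suc (e l)) \<omega>) = X (fst s) (snd s) \<omega> ^ cnte w e s" .
  qed
  finally show ?thesis .
qed

lemma nth_lt: "set w \<subseteq> {..<m} \<Longrightarrow> j < length w \<Longrightarrow> w ! j < m"
  by (meson lessThan_iff nth_mem subsetD)

lemma Sg_sub: "set w \<subseteq> {..<m} \<Longrightarrow> Sg w e \<subseteq> {..<m} \<times> UNIV"
  using nth_lt by (auto simp: Sg_def gk_def)

lemma finite_Sg[simp]: "finite (Sg w e)" by (simp add: Sg_def)

lemma mu_formula:
  assumes w: "set w \<subseteq> {..<m}"
  shows "integrable M (\<lambda>\<omega>. \<Prod>l<length w. X (w ! l) (Suc (e l)) \<omega>)"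
    and "mu w e = (\<Prod>s\<in>Sg w e. \<integral>\<omega>. X (fst s) (snd s) \<omega> ^ cnte w e s \<partial>M)"
proof -
  have ind0: "indep_vars (\<lambda>_. borel) (\<lambda>(i, j). X i j) (Sg w e)"
    by (rule indep_vars_subset[OF indep Sg_sub[OF w]])
  have ind: "indep_vars (\<lambda>_. borel) (\<lambda>s \<omega>. X (fst s) (snd s) \<omega> ^ cnte w e s) (Sg w e)"
    using indep_vars_compose2[OF ind0, of "\<lambda>s x. x ^ cnte w e s" "\<lambda>_. borel"]
    by (simp add: case_prod_beta)
  have int: "integrable M (\<lambda>\<omega>. X (fst s) (snd s) \<omega> ^ cnte w e s)" if "s \<in> Sg w e" for s
  proof -
    have "fst s < m" using Sg_sub[OF w, of e] that by auto
    then show ?thesis by (rule int_pow)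
  qed
  show "integrable M (\<lambda>\<omega>. \<Prod>l<length w. X (w ! l) (Suc (e l)) \<omega>)"
    unfolding group_prod using indep_vars_integrable[OF finite_Sg ind int] by simp
  show "mu w e = (\<Prod>s\<in>Sg w e. \<integral>\<omega>. X (fst s) (snd s) \<omega> ^ cnte w e s \<partial>M)"
    unfolding mu_def group_prod using indep_vars_lebesgue_integral[OF finite_Sg ind int] by simp
qed

lemma cnte_cls: "j < length w \<Longrightarrow> cnte w e (gk w e j) = card (cls w e j)"
  unfolding cnte_def cls_def gk_def keyf_def by simp

lemma mu_NS:
  assumes w: "set w \<subseteq> {..<m}" and ns: "\<not> NS w e"
  shows "mu w e = 0"
proof -
  obtain j where j: "j < length w" "card (cls w e j) < 2" using ns by (auto simp: NS_def not_le)
  have "card (cls w e j) > 0" using mem_cls[OF j(1), of e] by (auto simp: card_gt_0_iff)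
  then have c1: "cnte w e (gk w e j) = 1" using j cnte_cls[OF j(1), of e] by simp
  have sin: "gk w e j \<in> Sg w e" using j by (simp add: Sg_def)
  have im: "w ! j < m" using w j(1) by (rule nth_lt)
  have "(\<integral>\<omega>. X (fst (gk w e j)) (snd (gk w e j)) \<omega> ^ cnte w e (gk w e j) \<partial>M) = 0"
    using c1 mean[OF im] by (simp add: gk_def)
  then show ?thesis unfolding mu_formula(2)[OF w] using sin by (intro prod_zero) auto
qed

lemma mu_pairs:
  assumes w: "set w \<subseteq> {..<m}" and all2: "\<forall>j<length w. card (cls w e j) = 2"
  shows "mu w e = 1"
proof -
  have "(\<integral>\<omega>. X (fst s) (snd s) \<omega> ^ cnte w e s \<partial>M) = 1" if s: "s \<in> Sg w e" for s
  proof -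
    obtain j where j: "j < length w" "s = gk w e j" using s by (auto simp: Sg_def)
    have "cnte w e s = 2" using j all2 cnte_cls by simp
    moreover have "w ! j < m" using w j(1) by (rule nth_lt)
    ultimately show ?thesis using var j by (simp add: gk_def)
  qed
  then show ?thesis unfolding mu_formula(2)[OF w] by simp
qed

lemma mu_bound:
  "\<exists>B\<ge>0. \<forall>e. \<bar>mu w e\<bar> \<le> B" if w: "set w \<subseteq> {..<m}"
proof -
  let ?k = "length w"
  have "\<forall>c\<in>{..?k}. \<exists>B. \<forall>i<m. \<forall>j. integrable M (\<lambda>\<omega>. \<bar>X i j \<omega>\<bar> ^ c) \<and> (\<integral>\<omega>. \<bar>X i j \<omega>\<bar> ^ c \<partial>M) \<le> B"
    using absmom by blast
  then obtain Bc where Bc: "\<forall>c\<in>{..?k}. \<forall>i<m. \<forall>j. integrable M (\<lambda>\<omega>. \<bar>X i j \<omega>\<bar> ^ c) \<and> (\<integral>\<omega>. \<bar>X i j \<omega>\<bar> ^ c \<partial>M) \<le> Bc c"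
    by metis
  define BB where "BB = 1 + (\<Sum>c\<le>?k. \<bar>Bc c\<bar>)"
  have BB1: "BB \<ge> 1" by (simp add: BB_def sum_nonneg)
  have fac: "\<bar>\<integral>\<omega>. X i j \<omega> ^ c \<partial>M\<bar> \<le> BB" if "i < m" "c \<le> ?k" for i j c
  proof -
    have "\<bar>\<integral>\<omega>. X i j \<omega> ^ c \<partial>M\<bar> \<le> (\<integral>\<omega>. \<bar>X i j \<omega> ^ c\<bar> \<partial>M)" by (rule integral_abs_bound)
    also have "\<dots> = (\<integral>\<omega>. \<bar>X i j \<omega>\<bar> ^ c \<partial>M)" by (simp add: power_abs)
    also have "\<dots> \<le> Bc c" using Bc that by auto
    also have "\<dots> \<le> \<bar>Bc c\<bar>" by simp
    also have "\<dots> \<le> (\<Sum>c\<le>?k. \<bar>Bc c\<bar>)" using that by (intro member_le_sum) auto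
    also have "\<dots> \<le> BB" by (simp add: BB_def)
    finally show ?thesis .
  qed
  have "\<bar>mu w e\<bar> \<le> BB ^ ?k" for e
  proof -
    have cS: "card (Sg w e) \<le> ?k" unfolding Sg_def using card_image_le[of "{..<?k}" "gk w e"] by simp
    have cle: "cnte w e s \<le> ?k" for s
      unfolding cnte_def by (rule order_trans[OF card_mono[of "{..<?k}"]]) auto
    have "\<bar>mu w e\<bar> = (\<Prod>s\<in>Sg w e. \<bar>\<integral>\<omega>. X (fst s) (snd s) \<omega> ^ cnte w e s \<partial>M\<bar>)"
      unfolding mu_formula(2)[OF w] by (simp add: abs_prod)
    also have "\<dots> \<le> (\<Prod>s\<in>Sg w e. BB)"
    proof (intro prod_mono conjI fac cle)
      fix s assume "s \<in> Sg w e"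
      then show "fst s < m" using Sg_sub[OF w, of e] by auto
    qed auto
    also have "\<dots> = BB ^ card (Sg w e)" by simp
    also have "\<dots> \<le> BB ^ ?k" using BB1 cS by (intro power_increasing) auto
    finally show ?thesis .
  qed
  then show ?thesis using BB1 by (intro exI[of _ "BB ^ ?k"]) auto
qed

end


lemma ncphi_poly:
  assumes fin: "finite W" and int: "\<And>w. w \<in> W \<Longrightarrow> integrable M' (\<lambda>\<omega>. mtrace n (word_prod n A w \<omega>))"
  shows "ncphi M' n (ncpoly_eval n W c A) = (\<Sum>w\<in>W. c w * ncphi M' n (word_prod n A w))"
proof -
  have tr: "mtrace n (ncpoly_eval n W c A \<omega>) = (\<Sum>w\<in>W. c w * mtrace n (word_prod n A w \<omega>))" for \<omega>
    unfolding mtrace_def ncpoly_eval_def by (simp add: sum_distrib_left sum.swap[of _ W])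
  have "(\<integral>\<omega>. mtrace n (ncpoly_eval n W c A \<omega>) \<partial>M') = (\<Sum>w\<in>W. c w * (\<integral>\<omega>. mtrace n (word_prod n A w \<omega>) \<partial>M'))"
    unfolding tr using int by (simp add: Bochner_Integration.integral_sum)
  then show ?thesis by (simp add: ncphi_def sum_distrib_left ac_simps)
qed

lemma cnt_card: "card {j. j < length w \<and> (even j \<longleftrightarrow> b) \<and> w ! j = i} = cnt b w i"
proof (induction w arbitrary: b)
  case Nil then show ?case by simp
next
  case (Cons x w)
  have eq: "{j. j < length (x # w) \<and> (even j \<longleftrightarrow> b) \<and> (x # w) ! j = i}
      = (if b \<and> x = i then {0} else {}) \<union> Suc ` {j. j < length w \<and> (even j \<longleftrightarrow> \<not> b) \<and> w ! j = i}"
  proof (intro equalityI subsetI)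
    fix j assume j: "j \<in> {j. j < length (x # w) \<and> (even j \<longleftrightarrow> b) \<and> (x # w) ! j = i}"
    show "j \<in> (if b \<and> x = i then {0} else {}) \<union> Suc ` {j. j < length w \<and> (even j \<longleftrightarrow> \<not> b) \<and> w ! j = i}"
    proof (cases j)
      case 0 then show ?thesis using j by auto
    next
      case (Suc j') then show ?thesis using j by auto
    qed
  next
    fix j assume "j \<in> (if b \<and> x = i then {0} else {}) \<union> Suc ` {j. j < length w \<and> (even j \<longleftrightarrow> \<not> b) \<and> w ! j = i}"
    then show "j \<in> {j. j < length (x # w) \<and> (even j \<longleftrightarrow> b) \<and> (x # w) ! j = i}"
      by (auto split: if_splits)
  qed
  have "card ((if b \<and> x = i then {0} else {}) \<union> Suc ` {j. j < length w \<and> (even j \<longleftrightarrow> \<not> b) \<and> w ! j = i})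
     = card (if b \<and> x = i then {0::nat} else {}) + card (Suc ` {j. j < length w \<and> (even j \<longleftrightarrow> \<not> b) \<and> w ! j = i})"
    by (rule card_Un_disjoint) auto
  also have "card (Suc ` {j. j < length w \<and> (even j \<longleftrightarrow> \<not> b) \<and> w ! j = i}) = cnt (\<not> b) w i"
    using Cons.IH[of "\<not> b"] by (simp add: card_image)
  finally show ?case unfolding eq by simp
qed

lemma Sig_card:
  assumes w: "set w \<subseteq> {..<m}"
  shows "real (card (Sig w)) = (\<Prod>i<m. if cnt True w i = cnt False w i then fact (cnt True w i) else 0)"
proof -
  let ?k = "length w"
  have lab: "(\<lambda>j. w ! j) ` (Od ?k \<union> Ev ?k) \<subseteq> {..<m}"
    using w by (auto simp: Od_def Ev_def dest!: nth_mem)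
  have cE: "card {b \<in> Ev ?k. w ! b = i} = cnt True w i" for i
    using cnt_card[of w True i] by (simp add: Ev_def)
  have cO: "card {a \<in> Od ?k. w ! a = i} = cnt False w i" for i
    using cnt_card[of w False i] by (simp add: Od_def)
  have "card (Sig w) = (\<Prod>i<m. Fnat (cnt True w i) (cnt False w i))"
    unfolding Sig_def using bij_count[OF finite_Od finite_Ev lab] cE cO by simp
  then have "real (card (Sig w)) = (\<Prod>i<m. real (Fnat (cnt True w i) (cnt False w i)))"
    by (simp add: of_nat_prod)
  also have "\<dots> = (\<Prod>i<m. if cnt True w i = cnt False w i then fact (cnt True w i) else 0)"
    by (intro prod.cong refl) (simp add: Fnat_def)
  finally show ?thesis .
qed

lemma gauss_ncphi:
  assumes N: "prob_space N"
    and gauss: "\<And>i. i < m \<Longrightarrow> complex_std_gaussian N (\<eta> i)"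
    and gindep: "prob_space.indep_vars N (\<lambda>_. borel) \<eta> {..<m}"
    and w: "set w \<subseteq> {..<m}"
  shows "integrable N (\<lambda>\<omega>. mtrace 2 (word_prod 2 (\<lambda>i \<omega>. a_mat (\<eta> i \<omega>)) w \<omega>))"
    and "ncphi N 2 (word_prod 2 (\<lambda>i \<omega>. a_mat (\<eta> i \<omega>)) w) =
       (if even (length w) then complex_of_real (\<Prod>i<m. if cnt True w i = cnt False w i then fact (cnt True w i) else 0) else 0)"
proof -
  note g = gauss_side[OF N gauss gindep w]
  show "integrable N (\<lambda>\<omega>. mtrace 2 (word_prod 2 (\<lambda>i \<omega>. a_mat (\<eta> i \<omega>)) w \<omega>))"
    unfolding trace_amat using g(1)
    by (cases "even (length w)") (simp_all add: Bochner_Integration.integrable_add integrable_cnj)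
  show "ncphi N 2 (word_prod 2 (\<lambda>i \<omega>. a_mat (\<eta> i \<omega>)) w) =
       (if even (length w) then complex_of_real (\<Prod>i<m. if cnt True w i = cnt False w i then fact (cnt True w i) else 0) else 0)"
  proof (cases "even (length w)")
    case True
    have "ncphi N 2 (word_prod 2 (\<lambda>i \<omega>. a_mat (\<eta> i \<omega>)) w) =
        (1/2) * ((\<integral>\<omega>. Qf \<eta> True w \<omega> \<partial>N) + cnj (\<integral>\<omega>. Qf \<eta> True w \<omega> \<partial>N))"
      unfolding ncphi_def trace_amat using True g(1) by simp
    then show ?thesis using True g(2) by simp
  next
    case False
    then show ?thesis unfolding ncphi_def trace_amat by simp
  qed
qed

context rcs
begin

lemma trace_rc:
  assumes k: "length w \<ge> 1"
  shows "mtrace n (word_prod n (\<lambda>i. rev_circ n (X i)) w \<omega>) =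
    (\<Sum>r\<in>PE (length w) n. complex_of_real ((\<Prod>l<length w. X (w ! l) (Suc (Emap (length w) n r l)) \<omega>) / sqrt (real n) ^ length w))"
proof -
  let ?k = "length w"
  have "mtrace n (word_prod n (\<lambda>i. rev_circ n (X i)) w \<omega>) =
     (\<Sum>r\<in>PE ?k n. \<Prod>l<?k. rev_circ n (X (w ! l)) \<omega> (r l) (r (Suc l mod ?k)))"
    by (rule trace_path[OF k])
  also have "\<dots> = (\<Sum>r\<in>PE ?k n. complex_of_real ((\<Prod>l<?k. X (w ! l) (Suc (Emap ?k n r l)) \<omega>) / sqrt (real n) ^ ?k))"
  proof (rule sum.cong[OF refl])
    fix r
    have "(\<Prod>l<?k. rev_circ n (X (w ! l)) \<omega> (r l) (r (Suc l mod ?k)))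
        = (\<Prod>l<?k. complex_of_real (X (w ! l) (Suc (Emap ?k n r l)) \<omega> / sqrt (real n)))"
      by (rule prod.cong[OF refl]) (simp add: rev_circ_def Emap_def)
    also have "\<dots> = complex_of_real (\<Prod>l<?k. X (w ! l) (Suc (Emap ?k n r l)) \<omega> / sqrt (real n))"
      by (simp add: of_real_prod)
    also have "(\<Prod>l<?k. X (w ! l) (Suc (Emap ?k n r l)) \<omega> / sqrt (real n)) = (\<Prod>l<?k. X (w ! l) (Suc (Emap ?k n r l)) \<omega>) / sqrt (real n) ^ ?k"
      by (simp add: prod_dividef)
    finally show "(\<Prod>l<?k. rev_circ n (X (w ! l)) \<omega> (r l) (r (Suc l mod ?k))) =
        complex_of_real ((\<Prod>l<?k. X (w ! l) (Suc (Emap ?k n r l)) \<omega>) / sqrt (real n) ^ ?k)" .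
  qed
  finally show ?thesis .
qed

lemma rc_ncphi:
  assumes k: "length w \<ge> 1" and w: "set w \<subseteq> {..<m}"
  shows "integrable M (\<lambda>\<omega>. mtrace n (word_prod n (\<lambda>i. rev_circ n (X i)) w \<omega>))"
    and "ncphi M n (word_prod n (\<lambda>i. rev_circ n (X i)) w) =
      complex_of_real ((\<Sum>r\<in>PE (length w) n. mu w (Emap (length w) n r)) / (real n * sqrt (real n) ^ length w))"
proof -
  let ?k = "length w"
  have int: "integrable M (\<lambda>\<omega>. complex_of_real ((\<Prod>l<?k. X (w ! l) (Suc (Emap ?k n r l)) \<omega>) / sqrt (real n) ^ ?k))" for r
    by (intro integrable_of_real integrable_divide_zero mu_formula(1)[OF w])
  show "integrable M (\<lambda>\<omega>. mtrace n (word_prod n (\<lambda>i. rev_circ n (X i)) w \<omega>))"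
    unfolding trace_rc[OF k] using int by auto
  have "(\<integral>\<omega>. mtrace n (word_prod n (\<lambda>i. rev_circ n (X i)) w \<omega>) \<partial>M)
      = (\<Sum>r\<in>PE ?k n. complex_of_real (mu w (Emap ?k n r) / sqrt (real n) ^ ?k))"
  proof -
    have "(\<integral>\<omega>. mtrace n (word_prod n (\<lambda>i. rev_circ n (X i)) w \<omega>) \<partial>M)
       = (\<Sum>r\<in>PE ?k n. (\<integral>\<omega>. complex_of_real ((\<Prod>l<?k. X (w ! l) (Suc (Emap ?k n r l)) \<omega>) / sqrt (real n) ^ ?k) \<partial>M))"
      unfolding trace_rc[OF k]
      by (rule Bochner_Integration.integral_sum[where f = "\<lambda>r \<omega>. complex_of_real ((\<Prod>l<?k. X (w ! l) (Suc (Emap ?k n r l)) \<omega>) / sqrt (real n) ^ ?k)"]) (rule int)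
    also have "\<dots> = (\<Sum>r\<in>PE ?k n. complex_of_real (mu w (Emap ?k n r) / sqrt (real n) ^ ?k))"
      by (intro sum.cong refl) (simp only: integral_complex_of_real integral_divide_zero mu_def)
    finally show ?thesis .
  qed
  then show "ncphi M n (word_prod n (\<lambda>i. rev_circ n (X i)) w) =
      complex_of_real ((\<Sum>r\<in>PE ?k n. mu w (Emap ?k n r)) / (real n * sqrt (real n) ^ ?k))"
    by (simp add: ncphi_def sum_divide_distrib[symmetric] divide_divide_eq_left ac_simps)
qed

end


lemma sqrt_pow_even: "sqrt (real n) ^ (2 * h) = real n ^ h"
  by (simp add: power_mult)

lemma sqrt_pow_odd: "sqrt (real n) ^ (2 * h + 1) = real n ^ h * sqrt (real n)"
  by (simp add: power_mult)

lemma lim_I: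
  "(\<lambda>n. real (\<Prod>i<h. n - i) / real n ^ h) \<longlonglongrightarrow> 1"
proof -
  have lim: "(\<lambda>n. \<Prod>i<h. (1 - real i * inverse (real n))) \<longlonglongrightarrow> (\<Prod>i<h. (1 - real i * 0))"
    by (intro tendsto_prod tendsto_diff tendsto_const tendsto_mult lim_inverse_n)
  have ev: "eventually (\<lambda>n. (\<Prod>i<h. (1 - real i * inverse (real n))) = real (\<Prod>i<h. n - i) / real n ^ h) sequentially"
    using eventually_ge_at_top[of "h + 1"]
  proof eventually_elim
    case (elim n)
    then have n0: "real n > 0" by simp
    have "real (\<Prod>i<h. n - i) = (\<Prod>i<h. real n - real i)"
      using elim by (simp add: of_nat_prod of_nat_diff)
    also have "\<dots> / real n ^ h = (\<Prod>i<h. (real n - real i) / real n)"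
      by (simp add: prod_dividef)
    also have "\<dots> = (\<Prod>i<h. (1 - real i * inverse (real n)))"
      using n0 by (intro prod.cong refl) (simp add: field_simps)
    finally show ?case by simp
  qed
  show ?thesis using Lim_transform_eventually[OF lim ev] by simp
qed

context rcs
begin

lemma rc_limit_real:
  assumes k: "length w \<ge> 1" and w: "set w \<subseteq> {..<m}"
  shows "(\<lambda>n. (\<Sum>r\<in>PE (length w) n. mu w (Emap (length w) n r)) / (real n * sqrt (real n) ^ length w))
     \<longlonglongrightarrow> (if even (length w) then real (card (Sig w)) else 0)"
proof -
  let ?k = "length w"
  let ?S = "\<lambda>n. (\<Sum>r\<in>PE ?k n. mu w (Emap ?k n r))"
  obtain B where B0: "B \<ge> 0" and B: "\<And>e. \<bar>mu w e\<bar> \<le> B" using mu_bound[OF w] by blast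
  show ?thesis
  proof (cases "even ?k")
    case True
    define h where "h = ?k div 2"
    have kh: "?k = 2 * h" using True by (simp add: h_def)
    have h1: "h \<ge> 1" using k kh by simp
    define C where "C = real (card (Sig w))"
    define G where "G n = real (\<Sum>\<sigma>\<in>Sig w. card (Gs w n \<sigma>))" for n
    define K where "K = B * real (?k ^ ?k + ?k ^ ?k * ?k * 2)"
    have cEv: "card (Ev ?k) = h" using kh by (simp add: card_Ev)
    have Gup: "G n \<le> C * real n ^ h" for n
    proof -
      have "(\<Sum>\<sigma>\<in>Sig w. card (Gs w n \<sigma>)) \<le> (\<Sum>\<sigma>\<in>Sig w. n ^ h)"
        using G4_upper cEv by (intro sum_mono) auto
      also have "\<dots> = card (Sig w) * n ^ h" by simp
      finally have "G n \<le> real (card (Sig w) * n ^ h)" unfolding G_def by (rule of_nat_mono)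
      then show ?thesis by (simp add: C_def)
    qed
    have Glow: "C * real (\<Prod>i<h. n - i) \<le> G n" for n
    proof -
      have "(\<Sum>\<sigma>\<in>Sig w. (\<Prod>i<h. n - i)) \<le> (\<Sum>\<sigma>\<in>Sig w. card (Gs w n \<sigma>))"
      proof (intro sum_mono)
        fix \<sigma> assume s: "\<sigma> \<in> Sig w"
        show "(\<Prod>i<h. n - i) \<le> card (Gs w n \<sigma>)"
          using G4_lower[OF s, of n] card_inj_Ev[of ?k n] cEv by simp
      qed
      moreover have "(\<Sum>\<sigma>\<in>Sig w. (\<Prod>i<h. n - i)) = card (Sig w) * (\<Prod>i<h. n - i)" by simp
      ultimately have "card (Sig w) * (\<Prod>i<h. n - i) \<le> (\<Sum>\<sigma>\<in>Sig w. card (Gs w n \<sigma>))" by simp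
      then have "real (card (Sig w) * (\<Prod>i<h. n - i)) \<le> G n" unfolding G_def by (rule of_nat_mono)
      then show ?thesis by (simp add: C_def)
    qed
    have lim1: "(\<lambda>n. G n / real n ^ h) \<longlonglongrightarrow> C"
    proof (rule tendsto_sandwich)
      show "eventually (\<lambda>n. C * (real (\<Prod>i<h. n - i) / real n ^ h) \<le> G n / real n ^ h) sequentially"
        using eventually_gt_at_top[of 0]
      proof eventually_elim
        case (elim n)
        then have "real n ^ h > 0" by simp
        then show ?case using Glow[of n] by (simp add: divide_right_mono)
      qed
      show "eventually (\<lambda>n. G n / real n ^ h \<le> C) sequentially"
        using eventually_gt_at_top[of 0]
      proof eventually_elim
        case (elim n)
        then have "real n ^ h > 0" by simp
        then show ?case using Gup[of n] by (simp add: divide_le_eq)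
      qed
      show "(\<lambda>n. C * (real (\<Prod>i<h. n - i) / real n ^ h)) \<longlonglongrightarrow> C"
        using tendsto_mult[OF tendsto_const lim_I, of C h] by simp
      show "(\<lambda>n. C) \<longlonglongrightarrow> C" by simp
    qed
    define D where "D n = (\<Sum>e\<in>En ?k n. mu w e) - G n" for n
    have Dbound: "\<bar>D n\<bar> \<le> K * real n ^ (h - 1)" if n: "n \<ge> 1" for n
    proof -
      have "\<bar>D n\<bar> \<le> B * real (?k ^ ?k + ?k ^ ?k * ?k * 2) * real n ^ (?k div 2 - 1)"
        unfolding D_def G_def
      proof (rule comb_main[OF True n])
        fix e show "\<bar>mu w e\<bar> \<le> B" by (rule B)
      next
        fix e assume "\<not> NS w e" then show "mu w e = 0" by (rule mu_NS[OF w])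
      next
        fix e assume "\<forall>j<?k. card (cls w e j) = 2" then show "mu w e = 1" by (rule mu_pairs[OF w])
      qed
      then show ?thesis by (simp add: K_def h_def)
    qed
    have lim2: "(\<lambda>n. D n / real n ^ h) \<longlonglongrightarrow> 0"
    proof (rule Lim_null_comparison)
      show "eventually (\<lambda>n. norm (D n / real n ^ h) \<le> K * inverse (real n)) sequentially"
        using eventually_ge_at_top[of 1]
      proof eventually_elim
        case (elim n)
        then have np: "real n > 0" by simp
        have "norm (D n / real n ^ h) = \<bar>D n\<bar> / real n ^ h" by (simp add: abs_divide)
        also have "\<dots> \<le> K * real n ^ (h - 1) / real n ^ h"
          using Dbound[OF elim] np by (intro divide_right_mono) auto
        also have "\<dots> = K * inverse (real n)"
        proof -
          have "real n ^ h = real n * real n ^ (h - 1)" using h1 by (metis power_eq_if not_one_le_zero)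
          then show ?thesis using np by (simp add: field_simps)
        qed
        finally show ?case .
      qed
      show "(\<lambda>n. K * inverse (real n)) \<longlonglongrightarrow> 0"
        using tendsto_mult[OF tendsto_const lim_inverse_n, of K] by simp
    qed
    have eq: "eventually (\<lambda>n. G n / real n ^ h + D n / real n ^ h = ?S n / (real n * sqrt (real n) ^ ?k)) sequentially"
      using eventually_ge_at_top[of 1]
    proof eventually_elim
      case (elim n)
      have np: "real n > 0" using elim by simp
      have "?S n = real n * (\<Sum>e\<in>En ?k n. mu w e)"
        by (rule sum_Emap[OF True k elim])
      moreover have "sqrt (real n) ^ ?k = real n ^ h" unfolding kh by (rule sqrt_pow_even)
      ultimately show ?case using np by (simp add: D_def add_divide_distrib[symmetric])
    qed
    have "(\<lambda>n. G n / real n ^ h + D n / real n ^ h) \<longlonglongrightarrow> C + 0"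
      by (rule tendsto_add[OF lim1 lim2])
    then have "(\<lambda>n. ?S n / (real n * sqrt (real n) ^ ?k)) \<longlonglongrightarrow> C"
      using Lim_transform_eventually[OF _ eq] by simp
    then show ?thesis using True by (simp add: C_def)
  next
    case False
    define h where "h = ?k div 2"
    have kh: "?k = 2 * h + 1" using False by (simp add: h_def)
    define K where "K = B * real (?k ^ ?k)"
    have bound: "norm (?S n / (real n * sqrt (real n) ^ ?k)) \<le> K * inverse (sqrt (real n))" if n: "n \<ge> 1" for n
    proof -
      have np: "real n > 0" using n by simp
      have "\<bar>?S n\<bar> \<le> (\<Sum>r\<in>PE ?k n. \<bar>mu w (Emap ?k n r)\<bar>)" by (rule sum_abs)
      also have "\<dots> \<le> (\<Sum>r\<in>PE ?k n. if NS w (Emap ?k n r) then B else 0)"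
        using B mu_NS[OF w] by (intro sum_mono) auto
      also have "\<dots> = B * real (card {r \<in> PE ?k n. NS w (Emap ?k n r)})"
        by (simp add: sum.If_cases Int_def)
      also have "\<dots> \<le> B * real (n * (?k ^ ?k * n ^ h))"
      proof -
        have "card {r \<in> PE ?k n. NS w (Emap ?k n r)} \<le> n * card {e \<in> PE ?k n. NS w e}"
          by (rule card_Emap[OF k n])
        also have "card {e \<in> PE ?k n. NS w e} \<le> ?k ^ ?k * n ^ h"
        proof (rule count_gen[OF _ n])
          fix e assume "NS w e"
          then show "card (Rs w e) \<le> h" using NS_Rs[of w e] kh by simp
        qed
        finally have cc: "card {r \<in> PE ?k n. NS w (Emap ?k n r)} \<le> n * (?k ^ ?k * n ^ h)"
          by (simp add: mult_left_mono)
        show ?thesis by (rule mult_left_mono[OF of_nat_mono[OF cc] B0])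
      qed
      finally have sb: "\<bar>?S n\<bar> \<le> B * real (n * (?k ^ ?k * n ^ h))" .
      have "norm (?S n / (real n * sqrt (real n) ^ ?k)) = \<bar>?S n\<bar> / (real n * (real n ^ h * sqrt (real n)))"
        unfolding kh sqrt_pow_odd by (simp add: abs_divide)
      also have "\<dots> \<le> B * real (n * (?k ^ ?k * n ^ h)) / (real n * (real n ^ h * sqrt (real n)))"
        using sb np by (intro divide_right_mono) auto
      also have "\<dots> = K * inverse (sqrt (real n))"
        using np by (simp add: K_def field_simps)
      finally show ?thesis .
    qed
    have "(\<lambda>n. ?S n / (real n * sqrt (real n) ^ ?k)) \<longlonglongrightarrow> 0"
    proof (rule Lim_null_comparison)
      show "eventually (\<lambda>n. norm (?S n / (real n * sqrt (real n) ^ ?k)) \<le> K * inverse (sqrt (real n))) sequentially"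
        using eventually_ge_at_top[of 1] by eventually_elim (rule bound)
      have "(\<lambda>n. sqrt (inverse (real n))) \<longlonglongrightarrow> sqrt 0"
        by (intro tendsto_real_sqrt lim_inverse_n)
      then have "(\<lambda>n. inverse (sqrt (real n))) \<longlonglongrightarrow> 0" by (simp add: real_sqrt_inverse)
      then show "(\<lambda>n. K * inverse (sqrt (real n))) \<longlonglongrightarrow> 0"
        using tendsto_mult[OF tendsto_const, of _ 0 sequentially K] by simp
    qed
    then show ?thesis using False by simp
  qed
qed

end


lemma ncphi_empty:
  assumes "prob_space M'" "n \<ge> 1"
  shows "ncphi M' n (word_prod n A []) = 1"
  and "integrable M' (\<lambda>\<omega>. mtrace n (word_prod n A [] \<omega>))"
proof -
  interpret prob_space M' by (rule assms(1))
  have tr: "mtrace n (word_prod n A [] \<omega>) = of_nat n" for \<omega>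
    by (simp add: mtrace_def mat_id_def)
  show "ncphi M' n (word_prod n A []) = 1"
    unfolding ncphi_def tr using assms(2) by (simp add: prob_space)
  show "integrable M' (\<lambda>\<omega>. mtrace n (word_prod n A [] \<omega>))"
    unfolding tr by simp
qed

theorem theorem3:
  fixes M :: "'a measure" and X :: "nat \<Rightarrow> nat \<Rightarrow> 'a \<Rightarrow> real" and m :: nat
    and N :: "'b measure" and \<eta> :: "nat \<Rightarrow> 'b \<Rightarrow> complex"
    and W :: "nat list set" and c :: "nat list \<Rightarrow> complex"
  assumes "prob_space M" and "m \<ge> 1"
    and indep: "prob_space.indep_vars M (\<lambda>_. borel) (\<lambda>(i, j). X i j) ({..<m} \<times> UNIV)"
    and mean: "\<And>i j. i < m \<Longrightarrow> integrable M (X i j) \<and> (\<integral>\<omega>. X i j \<omega> \<partial>M) = 0"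
    and var: "\<And>i j. i < m \<Longrightarrow> integrable M (\<lambda>\<omega>. (X i j \<omega>)^2) \<and> (\<integral>\<omega>. (X i j \<omega>)^2 \<partial>M) = 1"
    and moments: "\<And>i k. i < m \<Longrightarrow> k \<ge> 3 \<Longrightarrow>
        \<exists>B. \<forall>j. integrable M (\<lambda>\<omega>. \<bar>X i j \<omega>\<bar> ^ k) \<and> (\<integral>\<omega>. \<bar>X i j \<omega>\<bar> ^ k \<partial>M) \<le> B"
    and "prob_space N"
    and gauss: "\<And>i. i < m \<Longrightarrow> complex_std_gaussian N (\<eta> i)"
    and gindep: "prob_space.indep_vars N (\<lambda>_. borel) \<eta> {..<m}"
    and "finite W" and "\<And>w. w \<in> W \<Longrightarrow> set w \<subseteq> {..<m}"
  shows "(\<lambda>n. ncphi M n (ncpoly_eval n W c (\<lambda>i. rev_circ n (X i))))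
           \<longlonglongrightarrow> ncphi N 2 (ncpoly_eval 2 W c (\<lambda>i \<omega>. a_mat (\<eta> i \<omega>)))"
proof -
  interpret rcs M X m
  proof (rule rcs.intro[OF assms(1)], rule rcs_axioms.intro)
    show "prob_space.indep_vars M (\<lambda>_. borel) (\<lambda>(i, j). X i j) ({..<m} \<times> UNIV)" by (rule indep)
  next
    fix i j assume "i < m"
    then show "integrable M (X i j) \<and> (\<integral>\<omega>. X i j \<omega> \<partial>M) = 0" by (rule mean)
  next
    fix i j assume "i < m"
    then show "integrable M (\<lambda>\<omega>. (X i j \<omega>)^2) \<and> (\<integral>\<omega>. (X i j \<omega>)^2 \<partial>M) = 1" by (rule var)
  next
    fix i and k :: nat assume "i < m" "k \<ge> 3"
    then show "\<exists>B. \<forall>j. integrable M (\<lambda>\<omega>. \<bar>X i j \<omega>\<bar> ^ k) \<and> (\<integral>\<omega>. \<bar>X i j \<omega>\<bar> ^ k \<partial>M) \<le> B"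
      by (rule moments)
  qed
  have NP: "prob_space N" by fact
  have Wsub: "\<And>w. w \<in> W \<Longrightarrow> set w \<subseteq> {..<m}" by fact
  have intM: "integrable M (\<lambda>\<omega>. mtrace n (word_prod n (\<lambda>i. rev_circ n (X i)) w \<omega>))"
    if w: "set w \<subseteq> {..<m}" and n: "n \<ge> 1" for w n
  proof (cases "w = []")
    case True then show ?thesis using ncphi_empty(2)[OF assms(1) n] by simp
  next
    case False then show ?thesis using rc_ncphi(1)[OF _ w] by (simp add: Suc_le_eq)
  qed
  have lim_w: "(\<lambda>n. ncphi M n (word_prod n (\<lambda>i. rev_circ n (X i)) w))
      \<longlonglongrightarrow> ncphi N 2 (word_prod 2 (\<lambda>i \<omega>. a_mat (\<eta> i \<omega>)) w)"
    if w: "set w \<subseteq> {..<m}" for w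
  proof (cases "w = []")
    case True
    have N1: "ncphi N 2 (word_prod 2 (\<lambda>i \<omega>. a_mat (\<eta> i \<omega>)) w) = 1"
      unfolding True by (rule ncphi_empty(1)[OF NP]) simp
    have e1: "eventually (\<lambda>n. 1 = ncphi M n (word_prod n (\<lambda>i. rev_circ n (X i)) w)) sequentially"
      using eventually_ge_at_top[of 1]
    proof eventually_elim
      case (elim n)
      show ?case unfolding True by (rule sym, rule ncphi_empty(1)[OF assms(1) elim])
    qed
    have "(\<lambda>n. ncphi M n (word_prod n (\<lambda>i. rev_circ n (X i)) w)) \<longlonglongrightarrow> 1"
      by (rule Lim_transform_eventually[OF tendsto_const e1])
    then show ?thesis unfolding N1 .
  next
    case False
    then have k: "length w \<ge> 1" by (simp add: Suc_le_eq)
    have lim: "(\<lambda>n. complex_of_real ((\<Sum>r\<in>PE (length w) n. mu w (Emap (length w) n r)) / (real n * sqrt (real n) ^ length w)))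
       \<longlonglongrightarrow> complex_of_real (if even (length w) then real (card (Sig w)) else 0)"
      by (rule tendsto_of_real[OF rc_limit_real[OF k w]])
    have r1: "complex_of_real (if even (length w) then real (card (Sig w)) else 0)
       = ncphi N 2 (word_prod 2 (\<lambda>i \<omega>. a_mat (\<eta> i \<omega>)) w)"
    proof -
      have g2: "ncphi N 2 (word_prod 2 (\<lambda>i \<omega>. a_mat (\<eta> i \<omega>)) w) =
       (if even (length w) then complex_of_real (\<Prod>i<m. if cnt True w i = cnt False w i then fact (cnt True w i) else 0) else 0)"
        by (rule gauss_ncphi(2)[OF NP gauss gindep w])
      show ?thesis unfolding g2 Sig_card[OF w] by simp
    qed
    have r2: "(\<lambda>n. complex_of_real ((\<Sum>r\<in>PE (length w) n. mu w (Emap (length w) n r)) / (real n * sqrt (real n) ^ length w)))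
       = (\<lambda>n. ncphi M n (word_prod n (\<lambda>i. rev_circ n (X i)) w))"
      by (rule ext, rule rc_ncphi(2)[OF k w, symmetric])
    show ?thesis using lim unfolding r1 r2 .
  qed
  have eqM: "eventually (\<lambda>n. (\<Sum>w\<in>W. c w * ncphi M n (word_prod n (\<lambda>i. rev_circ n (X i)) w))
       = ncphi M n (ncpoly_eval n W c (\<lambda>i. rev_circ n (X i)))) sequentially"
    using eventually_ge_at_top[of 1]
  proof eventually_elim
    case (elim n)
    show ?case
      by (rule sym, rule ncphi_poly[OF assms(10)]) (rule intM[OF Wsub elim])
  qed
  have eqN: "ncphi N 2 (ncpoly_eval 2 W c (\<lambda>i \<omega>. a_mat (\<eta> i \<omega>)))
      = (\<Sum>w\<in>W. c w * ncphi N 2 (word_prod 2 (\<lambda>i \<omega>. a_mat (\<eta> i \<omega>)) w))"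
    by (rule ncphi_poly[OF assms(10)]) (rule gauss_ncphi(1)[OF NP gauss gindep Wsub])
  have "(\<lambda>n. \<Sum>w\<in>W. c w * ncphi M n (word_prod n (\<lambda>i. rev_circ n (X i)) w))
      \<longlonglongrightarrow> (\<Sum>w\<in>W. c w * ncphi N 2 (word_prod 2 (\<lambda>i \<omega>. a_mat (\<eta> i \<omega>)) w))"
    by (intro tendsto_sum tendsto_mult tendsto_const lim_w Wsub)
  then show ?thesis unfolding eqN using Lim_transform_eventually[OF _ eqM] by blast
qed

end
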